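(* There exists a $(418,18)$-arc in $\operatorname{PG}(2,25)$; hence $m_{18}(2,25)\ge 418$.
   Context: Points of $\operatorname{PG}(2,q)$ are the 1-dimensional subspaces of $\operatorname{GF}(q)^3$, lines are the 2-dimensional subspaces. An $(n,r)$-arc in $\operatorname{PG}(2,q)$ is a set $\mathcal B$ of $n$ points such that every line contains at most $r$ points of $\mathcal B$ and at least one line contains exactly $r$ points of $\mathcal B$. $m_r(2,q)$ is the maximum $n$ for which an $(n,r)$-arc in $\operatorname{PG}(2,q)$ exists. *)

theory Defs
  imports Main "HOL-Library.Cardinality"
begin

fun vsc :: "'a::field \<Rightarrow> 'a \<times> 'a \<times> 'a \<Rightarrow> 'a \<times> 'a \<times> 'a" where
  "vsc c (x, y, z) = (c * x, c * y, c * z)"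

fun vadd :: "'a::field \<times> 'a \<times> 'a \<Rightarrow> 'a \<times> 'a \<times> 'a \<Rightarrow> 'a \<times> 'a \<times> 'a" where
  "vadd (x, y, z) (x', y', z') = (x + x', y + y', z + z')"

definition pg_point :: "('a::field \<times> 'a \<times> 'a) set \<Rightarrow> bool" where
  "pg_point P \<longleftrightarrow> (\<exists>v. v \<noteq> (0, 0, 0) \<and> P = {vsc c v | c. True})"

definition pg_line :: "('a::field \<times> 'a \<times> 'a) set \<Rightarrow> bool" where
  "pg_line L \<longleftrightarrow> (\<exists>u w. (\<forall>a b. vadd (vsc a u) (vsc b w) = (0, 0, 0) \<longrightarrow> a = 0 \<and> b = 0)
                      \<and> L = {vadd (vsc s u) (vsc t w) | s t. True})"

definition is_arc :: "nat \<Rightarrow> nat \<Rightarrow> ('a::field \<times> 'a \<times> 'a) set set \<Rightarrow> bool" where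
  "is_arc n r B \<longleftrightarrow> finite B \<and> (\<forall>P\<in>B. pg_point P) \<and> card B = n
     \<and> (\<forall>L. pg_line L \<longrightarrow> card {P \<in> B. P \<subseteq> L} \<le> r)
     \<and> (\<exists>L. pg_line L \<and> card {P \<in> B. P \<subseteq> L} = r)"

definition m_arc :: "'a::field itself \<Rightarrow> nat \<Rightarrow> nat" where
  "m_arc _ r = Max {n. \<exists>B :: ('a \<times> 'a \<times> 'a) set set. is_arc n r B}"

end

theory Submission
  imports Defs "HOL-Number_Theory.Residues"
begin

datatype f = E0 | E1 | E2 | E3 | E4 | E5 | E6 | E7 | E8 | E9 | E10 | E11 | E12 | E13 | E14 | E15 | E16 | E17 | E18 | E19 | E20 | E21 | E22 | E23 | E24

primrec code :: "f \<Rightarrow> nat" where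
  "code E0 = 0" |
  "code E1 = 1" |
  "code E2 = 2" |
  "code E3 = 3" |
  "code E4 = 4" |
  "code E5 = 5" |
  "code E6 = 6" |
  "code E7 = 7" |
  "code E8 = 8" |
  "code E9 = 9" |
  "code E10 = 10" |
  "code E11 = 11" |
  "code E12 = 12" |
  "code E13 = 13" |
  "code E14 = 14" |
  "code E15 = 15" |
  "code E16 = 16" |
  "code E17 = 17" |
  "code E18 = 18" |
  "code E19 = 19" |
  "code E20 = 20" |
  "code E21 = 21" |
  "code E22 = 22" |
  "code E23 = 23" |
  "code E24 = 24"

primrec a0 :: "f \<Rightarrow> f" where
  "a0 E0 = E0" |
  "a0 E1 = E1" |
  "a0 E2 = E2" |
  "a0 E3 = E3" |
  "a0 E4 = E4" |
  "a0 E5 = E5" |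
  "a0 E6 = E6" |
  "a0 E7 = E7" |
  "a0 E8 = E8" |
  "a0 E9 = E9" |
  "a0 E10 = E10" |
  "a0 E11 = E11" |
  "a0 E12 = E12" |
  "a0 E13 = E13" |
  "a0 E14 = E14" |
  "a0 E15 = E15" |
  "a0 E16 = E16" |
  "a0 E17 = E17" |
  "a0 E18 = E18" |
  "a0 E19 = E19" |
  "a0 E20 = E20" |
  "a0 E21 = E21" |
  "a0 E22 = E22" |
  "a0 E23 = E23" |
  "a0 E24 = E24"

primrec a1 :: "f \<Rightarrow> f" where
  "a1 E0 = E1" |
  "a1 E1 = E2" |
  "a1 E2 = E3" |
  "a1 E3 = E4" |
  "a1 E4 = E0" |
  "a1 E5 = E6" |
  "a1 E6 = E7" |
  "a1 E7 = E8" |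
  "a1 E8 = E9" |
  "a1 E9 = E5" |
  "a1 E10 = E11" |
  "a1 E11 = E12" |
  "a1 E12 = E13" |
  "a1 E13 = E14" |
  "a1 E14 = E10" |
  "a1 E15 = E16" |
  "a1 E16 = E17" |
  "a1 E17 = E18" |
  "a1 E18 = E19" |
  "a1 E19 = E15" |
  "a1 E20 = E21" |
  "a1 E21 = E22" |
  "a1 E22 = E23" |
  "a1 E23 = E24" |
  "a1 E24 = E20"

primrec a2 :: "f \<Rightarrow> f" where
  "a2 E0 = E2" |
  "a2 E1 = E3" |
  "a2 E2 = E4" |
  "a2 E3 = E0" |
  "a2 E4 = E1" |
  "a2 E5 = E7" |
  "a2 E6 = E8" |
  "a2 E7 = E9" |
  "a2 E8 = E5" |
  "a2 E9 = E6" |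
  "a2 E10 = E12" |
  "a2 E11 = E13" |
  "a2 E12 = E14" |
  "a2 E13 = E10" |
  "a2 E14 = E11" |
  "a2 E15 = E17" |
  "a2 E16 = E18" |
  "a2 E17 = E19" |
  "a2 E18 = E15" |
  "a2 E19 = E16" |
  "a2 E20 = E22" |
  "a2 E21 = E23" |
  "a2 E22 = E24" |
  "a2 E23 = E20" |
  "a2 E24 = E21"

primrec a3 :: "f \<Rightarrow> f" where
  "a3 E0 = E3" |
  "a3 E1 = E4" |
  "a3 E2 = E0" |
  "a3 E3 = E1" |
  "a3 E4 = E2" |
  "a3 E5 = E8" |
  "a3 E6 = E9" |
  "a3 E7 = E5" |
  "a3 E8 = E6" |
  "a3 E9 = E7" |
  "a3 E10 = E13" |
  "a3 E11 = E14" |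
  "a3 E12 = E10" |
  "a3 E13 = E11" |
  "a3 E14 = E12" |
  "a3 E15 = E18" |
  "a3 E16 = E19" |
  "a3 E17 = E15" |
  "a3 E18 = E16" |
  "a3 E19 = E17" |
  "a3 E20 = E23" |
  "a3 E21 = E24" |
  "a3 E22 = E20" |
  "a3 E23 = E21" |
  "a3 E24 = E22"

primrec a4 :: "f \<Rightarrow> f" where
  "a4 E0 = E4" |
  "a4 E1 = E0" |
  "a4 E2 = E1" |
  "a4 E3 = E2" |
  "a4 E4 = E3" |
  "a4 E5 = E9" |
  "a4 E6 = E5" |
  "a4 E7 = E6" |
  "a4 E8 = E7" |
  "a4 E9 = E8" |
  "a4 E10 = E14" |
  "a4 E11 = E10" |
  "a4 E12 = E11" |
  "a4 E13 = E12" |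
  "a4 E14 = E13" |
  "a4 E15 = E19" |
  "a4 E16 = E15" |
  "a4 E17 = E16" |
  "a4 E18 = E17" |
  "a4 E19 = E18" |
  "a4 E20 = E24" |
  "a4 E21 = E20" |
  "a4 E22 = E21" |
  "a4 E23 = E22" |
  "a4 E24 = E23"

primrec a5 :: "f \<Rightarrow> f" where
  "a5 E0 = E5" |
  "a5 E1 = E6" |
  "a5 E2 = E7" |
  "a5 E3 = E8" |
  "a5 E4 = E9" |
  "a5 E5 = E10" |
  "a5 E6 = E11" |
  "a5 E7 = E12" |
  "a5 E8 = E13" |
  "a5 E9 = E14" |
  "a5 E10 = E15" |
  "a5 E11 = E16" |
  "a5 E12 = E17" |
  "a5 E13 = E18" |
  "a5 E14 = E19" |
  "a5 E15 = E20" |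
  "a5 E16 = E21" |
  "a5 E17 = E22" |
  "a5 E18 = E23" |
  "a5 E19 = E24" |
  "a5 E20 = E0" |
  "a5 E21 = E1" |
  "a5 E22 = E2" |
  "a5 E23 = E3" |
  "a5 E24 = E4"

primrec a6 :: "f \<Rightarrow> f" where
  "a6 E0 = E6" |
  "a6 E1 = E7" |
  "a6 E2 = E8" |
  "a6 E3 = E9" |
  "a6 E4 = E5" |
  "a6 E5 = E11" |
  "a6 E6 = E12" |
  "a6 E7 = E13" |
  "a6 E8 = E14" |
  "a6 E9 = E10" |
  "a6 E10 = E16" |
  "a6 E11 = E17" |
  "a6 E12 = E18" |
  "a6 E13 = E19" |
  "a6 E14 = E15" |
  "a6 E15 = E21" |
  "a6 E16 = E22" |
  "a6 E17 = E23" |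
  "a6 E18 = E24" |
  "a6 E19 = E20" |
  "a6 E20 = E1" |
  "a6 E21 = E2" |
  "a6 E22 = E3" |
  "a6 E23 = E4" |
  "a6 E24 = E0"

primrec a7 :: "f \<Rightarrow> f" where
  "a7 E0 = E7" |
  "a7 E1 = E8" |
  "a7 E2 = E9" |
  "a7 E3 = E5" |
  "a7 E4 = E6" |
  "a7 E5 = E12" |
  "a7 E6 = E13" |
  "a7 E7 = E14" |
  "a7 E8 = E10" |
  "a7 E9 = E11" |
  "a7 E10 = E17" |
  "a7 E11 = E18" |
  "a7 E12 = E19" |
  "a7 E13 = E15" |
  "a7 E14 = E16" |
  "a7 E15 = E22" |
  "a7 E16 = E23" |
  "a7 E17 = E24" |
  "a7 E18 = E20" |
  "a7 E19 = E21" |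
  "a7 E20 = E2" |
  "a7 E21 = E3" |
  "a7 E22 = E4" |
  "a7 E23 = E0" |
  "a7 E24 = E1"

primrec a8 :: "f \<Rightarrow> f" where
  "a8 E0 = E8" |
  "a8 E1 = E9" |
  "a8 E2 = E5" |
  "a8 E3 = E6" |
  "a8 E4 = E7" |
  "a8 E5 = E13" |
  "a8 E6 = E14" |
  "a8 E7 = E10" |
  "a8 E8 = E11" |
  "a8 E9 = E12" |
  "a8 E10 = E18" |
  "a8 E11 = E19" |
  "a8 E12 = E15" |
  "a8 E13 = E16" |
  "a8 E14 = E17" |
  "a8 E15 = E23" |
  "a8 E16 = E24" |
  "a8 E17 = E20" |
  "a8 E18 = E21" |
  "a8 E19 = E22" |
  "a8 E20 = E3" |
  "a8 E21 = E4" |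
  "a8 E22 = E0" |
  "a8 E23 = E1" |
  "a8 E24 = E2"

primrec a9 :: "f \<Rightarrow> f" where
  "a9 E0 = E9" |
  "a9 E1 = E5" |
  "a9 E2 = E6" |
  "a9 E3 = E7" |
  "a9 E4 = E8" |
  "a9 E5 = E14" |
  "a9 E6 = E10" |
  "a9 E7 = E11" |
  "a9 E8 = E12" |
  "a9 E9 = E13" |
  "a9 E10 = E19" |
  "a9 E11 = E15" |
  "a9 E12 = E16" |
  "a9 E13 = E17" |
  "a9 E14 = E18" |
  "a9 E15 = E24" |
  "a9 E16 = E20" |
  "a9 E17 = E21" |
  "a9 E18 = E22" |
  "a9 E19 = E23" |
  "a9 E20 = E4" |
  "a9 E21 = E0" |
  "a9 E22 = E1" |
  "a9 E23 = E2" |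
  "a9 E24 = E3"

primrec a10 :: "f \<Rightarrow> f" where
  "a10 E0 = E10" |
  "a10 E1 = E11" |
  "a10 E2 = E12" |
  "a10 E3 = E13" |
  "a10 E4 = E14" |
  "a10 E5 = E15" |
  "a10 E6 = E16" |
  "a10 E7 = E17" |
  "a10 E8 = E18" |
  "a10 E9 = E19" |
  "a10 E10 = E20" |
  "a10 E11 = E21" |
  "a10 E12 = E22" |
  "a10 E13 = E23" |
  "a10 E14 = E24" |
  "a10 E15 = E0" |
  "a10 E16 = E1" |
  "a10 E17 = E2" |
  "a10 E18 = E3" |
  "a10 E19 = E4" |
  "a10 E20 = E5" |
  "a10 E21 = E6" |
  "a10 E22 = E7" |
  "a10 E23 = E8" |
  "a10 E24 = E9"

primrec a11 :: "f \<Rightarrow> f" where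
  "a11 E0 = E11" |
  "a11 E1 = E12" |
  "a11 E2 = E13" |
  "a11 E3 = E14" |
  "a11 E4 = E10" |
  "a11 E5 = E16" |
  "a11 E6 = E17" |
  "a11 E7 = E18" |
  "a11 E8 = E19" |
  "a11 E9 = E15" |
  "a11 E10 = E21" |
  "a11 E11 = E22" |
  "a11 E12 = E23" |
  "a11 E13 = E24" |
  "a11 E14 = E20" |
  "a11 E15 = E1" |
  "a11 E16 = E2" |
  "a11 E17 = E3" |
  "a11 E18 = E4" |
  "a11 E19 = E0" |
  "a11 E20 = E6" |
  "a11 E21 = E7" |
  "a11 E22 = E8" |
  "a11 E23 = E9" |
  "a11 E24 = E5"

primrec a12 :: "f \<Rightarrow> f" where
  "a12 E0 = E12" |
  "a12 E1 = E13" |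
  "a12 E2 = E14" |
  "a12 E3 = E10" |
  "a12 E4 = E11" |
  "a12 E5 = E17" |
  "a12 E6 = E18" |
  "a12 E7 = E19" |
  "a12 E8 = E15" |
  "a12 E9 = E16" |
  "a12 E10 = E22" |
  "a12 E11 = E23" |
  "a12 E12 = E24" |
  "a12 E13 = E20" |
  "a12 E14 = E21" |
  "a12 E15 = E2" |
  "a12 E16 = E3" |
  "a12 E17 = E4" |
  "a12 E18 = E0" |
  "a12 E19 = E1" |
  "a12 E20 = E7" |
  "a12 E21 = E8" |
  "a12 E22 = E9" |
  "a12 E23 = E5" |
  "a12 E24 = E6"

primrec a13 :: "f \<Rightarrow> f" where
  "a13 E0 = E13" |
  "a13 E1 = E14" |
  "a13 E2 = E10" |
  "a13 E3 = E11" |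
  "a13 E4 = E12" |
  "a13 E5 = E18" |
  "a13 E6 = E19" |
  "a13 E7 = E15" |
  "a13 E8 = E16" |
  "a13 E9 = E17" |
  "a13 E10 = E23" |
  "a13 E11 = E24" |
  "a13 E12 = E20" |
  "a13 E13 = E21" |
  "a13 E14 = E22" |
  "a13 E15 = E3" |
  "a13 E16 = E4" |
  "a13 E17 = E0" |
  "a13 E18 = E1" |
  "a13 E19 = E2" |
  "a13 E20 = E8" |
  "a13 E21 = E9" |
  "a13 E22 = E5" |
  "a13 E23 = E6" |
  "a13 E24 = E7"

primrec a14 :: "f \<Rightarrow> f" where
  "a14 E0 = E14" |
  "a14 E1 = E10" |
  "a14 E2 = E11" |
  "a14 E3 = E12" |
  "a14 E4 = E13" |
  "a14 E5 = E19" |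
  "a14 E6 = E15" |
  "a14 E7 = E16" |
  "a14 E8 = E17" |
  "a14 E9 = E18" |
  "a14 E10 = E24" |
  "a14 E11 = E20" |
  "a14 E12 = E21" |
  "a14 E13 = E22" |
  "a14 E14 = E23" |
  "a14 E15 = E4" |
  "a14 E16 = E0" |
  "a14 E17 = E1" |
  "a14 E18 = E2" |
  "a14 E19 = E3" |
  "a14 E20 = E9" |
  "a14 E21 = E5" |
  "a14 E22 = E6" |
  "a14 E23 = E7" |
  "a14 E24 = E8"

primrec a15 :: "f \<Rightarrow> f" where
  "a15 E0 = E15" |
  "a15 E1 = E16" |
  "a15 E2 = E17" |
  "a15 E3 = E18" |
  "a15 E4 = E19" |
  "a15 E5 = E20" |
  "a15 E6 = E21" |
  "a15 E7 = E22" |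
  "a15 E8 = E23" |
  "a15 E9 = E24" |
  "a15 E10 = E0" |
  "a15 E11 = E1" |
  "a15 E12 = E2" |
  "a15 E13 = E3" |
  "a15 E14 = E4" |
  "a15 E15 = E5" |
  "a15 E16 = E6" |
  "a15 E17 = E7" |
  "a15 E18 = E8" |
  "a15 E19 = E9" |
  "a15 E20 = E10" |
  "a15 E21 = E11" |
  "a15 E22 = E12" |
  "a15 E23 = E13" |
  "a15 E24 = E14"

primrec a16 :: "f \<Rightarrow> f" where
  "a16 E0 = E16" |
  "a16 E1 = E17" |
  "a16 E2 = E18" |
  "a16 E3 = E19" |
  "a16 E4 = E15" |
  "a16 E5 = E21" |
  "a16 E6 = E22" |
  "a16 E7 = E23" |
  "a16 E8 = E24" |
  "a16 E9 = E20" |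
  "a16 E10 = E1" |
  "a16 E11 = E2" |
  "a16 E12 = E3" |
  "a16 E13 = E4" |
  "a16 E14 = E0" |
  "a16 E15 = E6" |
  "a16 E16 = E7" |
  "a16 E17 = E8" |
  "a16 E18 = E9" |
  "a16 E19 = E5" |
  "a16 E20 = E11" |
  "a16 E21 = E12" |
  "a16 E22 = E13" |
  "a16 E23 = E14" |
  "a16 E24 = E10"

primrec a17 :: "f \<Rightarrow> f" where
  "a17 E0 = E17" |
  "a17 E1 = E18" |
  "a17 E2 = E19" |
  "a17 E3 = E15" |
  "a17 E4 = E16" |
  "a17 E5 = E22" |
  "a17 E6 = E23" |
  "a17 E7 = E24" |
  "a17 E8 = E20" |
  "a17 E9 = E21" |
  "a17 E10 = E2" |
  "a17 E11 = E3" |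
  "a17 E12 = E4" |
  "a17 E13 = E0" |
  "a17 E14 = E1" |
  "a17 E15 = E7" |
  "a17 E16 = E8" |
  "a17 E17 = E9" |
  "a17 E18 = E5" |
  "a17 E19 = E6" |
  "a17 E20 = E12" |
  "a17 E21 = E13" |
  "a17 E22 = E14" |
  "a17 E23 = E10" |
  "a17 E24 = E11"

primrec a18 :: "f \<Rightarrow> f" where
  "a18 E0 = E18" |
  "a18 E1 = E19" |
  "a18 E2 = E15" |
  "a18 E3 = E16" |
  "a18 E4 = E17" |
  "a18 E5 = E23" |
  "a18 E6 = E24" |
  "a18 E7 = E20" |
  "a18 E8 = E21" |
  "a18 E9 = E22" |
  "a18 E10 = E3" |
  "a18 E11 = E4" |
  "a18 E12 = E0" |
  "a18 E13 = E1" |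
  "a18 E14 = E2" |
  "a18 E15 = E8" |
  "a18 E16 = E9" |
  "a18 E17 = E5" |
  "a18 E18 = E6" |
  "a18 E19 = E7" |
  "a18 E20 = E13" |
  "a18 E21 = E14" |
  "a18 E22 = E10" |
  "a18 E23 = E11" |
  "a18 E24 = E12"

primrec a19 :: "f \<Rightarrow> f" where
  "a19 E0 = E19" |
  "a19 E1 = E15" |
  "a19 E2 = E16" |
  "a19 E3 = E17" |
  "a19 E4 = E18" |
  "a19 E5 = E24" |
  "a19 E6 = E20" |
  "a19 E7 = E21" |
  "a19 E8 = E22" |
  "a19 E9 = E23" |
  "a19 E10 = E4" |
  "a19 E11 = E0" |
  "a19 E12 = E1" |
  "a19 E13 = E2" |
  "a19 E14 = E3" |
  "a19 E15 = E9" |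
  "a19 E16 = E5" |
  "a19 E17 = E6" |
  "a19 E18 = E7" |
  "a19 E19 = E8" |
  "a19 E20 = E14" |
  "a19 E21 = E10" |
  "a19 E22 = E11" |
  "a19 E23 = E12" |
  "a19 E24 = E13"

primrec a20 :: "f \<Rightarrow> f" where
  "a20 E0 = E20" |
  "a20 E1 = E21" |
  "a20 E2 = E22" |
  "a20 E3 = E23" |
  "a20 E4 = E24" |
  "a20 E5 = E0" |
  "a20 E6 = E1" |
  "a20 E7 = E2" |
  "a20 E8 = E3" |
  "a20 E9 = E4" |
  "a20 E10 = E5" |
  "a20 E11 = E6" |
  "a20 E12 = E7" |
  "a20 E13 = E8" |
  "a20 E14 = E9" |
  "a20 E15 = E10" |
  "a20 E16 = E11" |
  "a20 E17 = E12" |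
  "a20 E18 = E13" |
  "a20 E19 = E14" |
  "a20 E20 = E15" |
  "a20 E21 = E16" |
  "a20 E22 = E17" |
  "a20 E23 = E18" |
  "a20 E24 = E19"

primrec a21 :: "f \<Rightarrow> f" where
  "a21 E0 = E21" |
  "a21 E1 = E22" |
  "a21 E2 = E23" |
  "a21 E3 = E24" |
  "a21 E4 = E20" |
  "a21 E5 = E1" |
  "a21 E6 = E2" |
  "a21 E7 = E3" |
  "a21 E8 = E4" |
  "a21 E9 = E0" |
  "a21 E10 = E6" |
  "a21 E11 = E7" |
  "a21 E12 = E8" |
  "a21 E13 = E9" |
  "a21 E14 = E5" |
  "a21 E15 = E11" |
  "a21 E16 = E12" |
  "a21 E17 = E13" |
  "a21 E18 = E14" |
  "a21 E19 = E10" |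
  "a21 E20 = E16" |
  "a21 E21 = E17" |
  "a21 E22 = E18" |
  "a21 E23 = E19" |
  "a21 E24 = E15"

primrec a22 :: "f \<Rightarrow> f" where
  "a22 E0 = E22" |
  "a22 E1 = E23" |
  "a22 E2 = E24" |
  "a22 E3 = E20" |
  "a22 E4 = E21" |
  "a22 E5 = E2" |
  "a22 E6 = E3" |
  "a22 E7 = E4" |
  "a22 E8 = E0" |
  "a22 E9 = E1" |
  "a22 E10 = E7" |
  "a22 E11 = E8" |
  "a22 E12 = E9" |
  "a22 E13 = E5" |
  "a22 E14 = E6" |
  "a22 E15 = E12" |
  "a22 E16 = E13" |
  "a22 E17 = E14" |
  "a22 E18 = E10" |
  "a22 E19 = E11" |
  "a22 E20 = E17" |
  "a22 E21 = E18" |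
  "a22 E22 = E19" |
  "a22 E23 = E15" |
  "a22 E24 = E16"

primrec a23 :: "f \<Rightarrow> f" where
  "a23 E0 = E23" |
  "a23 E1 = E24" |
  "a23 E2 = E20" |
  "a23 E3 = E21" |
  "a23 E4 = E22" |
  "a23 E5 = E3" |
  "a23 E6 = E4" |
  "a23 E7 = E0" |
  "a23 E8 = E1" |
  "a23 E9 = E2" |
  "a23 E10 = E8" |
  "a23 E11 = E9" |
  "a23 E12 = E5" |
  "a23 E13 = E6" |
  "a23 E14 = E7" |
  "a23 E15 = E13" |
  "a23 E16 = E14" |
  "a23 E17 = E10" |
  "a23 E18 = E11" |
  "a23 E19 = E12" |
  "a23 E20 = E18" |
  "a23 E21 = E19" |
  "a23 E22 = E15" |
  "a23 E23 = E16" |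
  "a23 E24 = E17"

primrec a24 :: "f \<Rightarrow> f" where
  "a24 E0 = E24" |
  "a24 E1 = E20" |
  "a24 E2 = E21" |
  "a24 E3 = E22" |
  "a24 E4 = E23" |
  "a24 E5 = E4" |
  "a24 E6 = E0" |
  "a24 E7 = E1" |
  "a24 E8 = E2" |
  "a24 E9 = E3" |
  "a24 E10 = E9" |
  "a24 E11 = E5" |
  "a24 E12 = E6" |
  "a24 E13 = E7" |
  "a24 E14 = E8" |
  "a24 E15 = E14" |
  "a24 E16 = E10" |
  "a24 E17 = E11" |
  "a24 E18 = E12" |
  "a24 E19 = E13" |
  "a24 E20 = E19" |
  "a24 E21 = E15" |
  "a24 E22 = E16" |
  "a24 E23 = E17" |
  "a24 E24 = E18"

primrec fa :: "f \<Rightarrow> f \<Rightarrow> f" where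
  "fa E0 = a0" |
  "fa E1 = a1" |
  "fa E2 = a2" |
  "fa E3 = a3" |
  "fa E4 = a4" |
  "fa E5 = a5" |
  "fa E6 = a6" |
  "fa E7 = a7" |
  "fa E8 = a8" |
  "fa E9 = a9" |
  "fa E10 = a10" |
  "fa E11 = a11" |
  "fa E12 = a12" |
  "fa E13 = a13" |
  "fa E14 = a14" |
  "fa E15 = a15" |
  "fa E16 = a16" |
  "fa E17 = a17" |
  "fa E18 = a18" |
  "fa E19 = a19" |
  "fa E20 = a20" |
  "fa E21 = a21" |
  "fa E22 = a22" |
  "fa E23 = a23" |
  "fa E24 = a24"

primrec m0 :: "f \<Rightarrow> f" where
  "m0 E0 = E0" |
  "m0 E1 = E0" |
  "m0 E2 = E0" |
  "m0 E3 = E0" |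
  "m0 E4 = E0" |
  "m0 E5 = E0" |
  "m0 E6 = E0" |
  "m0 E7 = E0" |
  "m0 E8 = E0" |
  "m0 E9 = E0" |
  "m0 E10 = E0" |
  "m0 E11 = E0" |
  "m0 E12 = E0" |
  "m0 E13 = E0" |
  "m0 E14 = E0" |
  "m0 E15 = E0" |
  "m0 E16 = E0" |
  "m0 E17 = E0" |
  "m0 E18 = E0" |
  "m0 E19 = E0" |
  "m0 E20 = E0" |
  "m0 E21 = E0" |
  "m0 E22 = E0" |
  "m0 E23 = E0" |
  "m0 E24 = E0"

primrec m1 :: "f \<Rightarrow> f" where
  "m1 E0 = E0" |
  "m1 E1 = E1" |
  "m1 E2 = E2" |
  "m1 E3 = E3" |
  "m1 E4 = E4" |
  "m1 E5 = E5" |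
  "m1 E6 = E6" |
  "m1 E7 = E7" |
  "m1 E8 = E8" |
  "m1 E9 = E9" |
  "m1 E10 = E10" |
  "m1 E11 = E11" |
  "m1 E12 = E12" |
  "m1 E13 = E13" |
  "m1 E14 = E14" |
  "m1 E15 = E15" |
  "m1 E16 = E16" |
  "m1 E17 = E17" |
  "m1 E18 = E18" |
  "m1 E19 = E19" |
  "m1 E20 = E20" |
  "m1 E21 = E21" |
  "m1 E22 = E22" |
  "m1 E23 = E23" |
  "m1 E24 = E24"

primrec m2 :: "f \<Rightarrow> f" where
  "m2 E0 = E0" |
  "m2 E1 = E2" |
  "m2 E2 = E4" |
  "m2 E3 = E1" |
  "m2 E4 = E3" |
  "m2 E5 = E10" |
  "m2 E6 = E12" |
  "m2 E7 = E14" |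
  "m2 E8 = E11" |
  "m2 E9 = E13" |
  "m2 E10 = E20" |
  "m2 E11 = E22" |
  "m2 E12 = E24" |
  "m2 E13 = E21" |
  "m2 E14 = E23" |
  "m2 E15 = E5" |
  "m2 E16 = E7" |
  "m2 E17 = E9" |
  "m2 E18 = E6" |
  "m2 E19 = E8" |
  "m2 E20 = E15" |
  "m2 E21 = E17" |
  "m2 E22 = E19" |
  "m2 E23 = E16" |
  "m2 E24 = E18"

primrec m3 :: "f \<Rightarrow> f" where
  "m3 E0 = E0" |
  "m3 E1 = E3" |
  "m3 E2 = E1" |
  "m3 E3 = E4" |
  "m3 E4 = E2" |
  "m3 E5 = E15" |
  "m3 E6 = E18" |
  "m3 E7 = E16" |
  "m3 E8 = E19" |
  "m3 E9 = E17" |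
  "m3 E10 = E5" |
  "m3 E11 = E8" |
  "m3 E12 = E6" |
  "m3 E13 = E9" |
  "m3 E14 = E7" |
  "m3 E15 = E20" |
  "m3 E16 = E23" |
  "m3 E17 = E21" |
  "m3 E18 = E24" |
  "m3 E19 = E22" |
  "m3 E20 = E10" |
  "m3 E21 = E13" |
  "m3 E22 = E11" |
  "m3 E23 = E14" |
  "m3 E24 = E12"

primrec m4 :: "f \<Rightarrow> f" where
  "m4 E0 = E0" |
  "m4 E1 = E4" |
  "m4 E2 = E3" |
  "m4 E3 = E2" |
  "m4 E4 = E1" |
  "m4 E5 = E20" |
  "m4 E6 = E24" |
  "m4 E7 = E23" |
  "m4 E8 = E22" |
  "m4 E9 = E21" |
  "m4 E10 = E15" |
  "m4 E11 = E19" |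
  "m4 E12 = E18" |
  "m4 E13 = E17" |
  "m4 E14 = E16" |
  "m4 E15 = E10" |
  "m4 E16 = E14" |
  "m4 E17 = E13" |
  "m4 E18 = E12" |
  "m4 E19 = E11" |
  "m4 E20 = E5" |
  "m4 E21 = E9" |
  "m4 E22 = E8" |
  "m4 E23 = E7" |
  "m4 E24 = E6"

primrec m5 :: "f \<Rightarrow> f" where
  "m5 E0 = E0" |
  "m5 E1 = E5" |
  "m5 E2 = E10" |
  "m5 E3 = E15" |
  "m5 E4 = E20" |
  "m5 E5 = E2" |
  "m5 E6 = E7" |
  "m5 E7 = E12" |
  "m5 E8 = E17" |
  "m5 E9 = E22" |
  "m5 E10 = E4" |
  "m5 E11 = E9" |
  "m5 E12 = E14" |
  "m5 E13 = E19" |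
  "m5 E14 = E24" |
  "m5 E15 = E1" |
  "m5 E16 = E6" |
  "m5 E17 = E11" |
  "m5 E18 = E16" |
  "m5 E19 = E21" |
  "m5 E20 = E3" |
  "m5 E21 = E8" |
  "m5 E22 = E13" |
  "m5 E23 = E18" |
  "m5 E24 = E23"

primrec m6 :: "f \<Rightarrow> f" where
  "m6 E0 = E0" |
  "m6 E1 = E6" |
  "m6 E2 = E12" |
  "m6 E3 = E18" |
  "m6 E4 = E24" |
  "m6 E5 = E7" |
  "m6 E6 = E13" |
  "m6 E7 = E19" |
  "m6 E8 = E20" |
  "m6 E9 = E1" |
  "m6 E10 = E14" |
  "m6 E11 = E15" |
  "m6 E12 = E21" |
  "m6 E13 = E2" |
  "m6 E14 = E8" |
  "m6 E15 = E16" |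
  "m6 E16 = E22" |
  "m6 E17 = E3" |
  "m6 E18 = E9" |
  "m6 E19 = E10" |
  "m6 E20 = E23" |
  "m6 E21 = E4" |
  "m6 E22 = E5" |
  "m6 E23 = E11" |
  "m6 E24 = E17"

primrec m7 :: "f \<Rightarrow> f" where
  "m7 E0 = E0" |
  "m7 E1 = E7" |
  "m7 E2 = E14" |
  "m7 E3 = E16" |
  "m7 E4 = E23" |
  "m7 E5 = E12" |
  "m7 E6 = E19" |
  "m7 E7 = E21" |
  "m7 E8 = E3" |
  "m7 E9 = E5" |
  "m7 E10 = E24" |
  "m7 E11 = E1" |
  "m7 E12 = E8" |
  "m7 E13 = E10" |
  "m7 E14 = E17" |
  "m7 E15 = E6" |
  "m7 E16 = E13" |
  "m7 E17 = E15" |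
  "m7 E18 = E22" |
  "m7 E19 = E4" |
  "m7 E20 = E18" |
  "m7 E21 = E20" |
  "m7 E22 = E2" |
  "m7 E23 = E9" |
  "m7 E24 = E11"

primrec m8 :: "f \<Rightarrow> f" where
  "m8 E0 = E0" |
  "m8 E1 = E8" |
  "m8 E2 = E11" |
  "m8 E3 = E19" |
  "m8 E4 = E22" |
  "m8 E5 = E17" |
  "m8 E6 = E20" |
  "m8 E7 = E3" |
  "m8 E8 = E6" |
  "m8 E9 = E14" |
  "m8 E10 = E9" |
  "m8 E11 = E12" |
  "m8 E12 = E15" |
  "m8 E13 = E23" |
  "m8 E14 = E1" |
  "m8 E15 = E21" |
  "m8 E16 = E4" |
  "m8 E17 = E7" |
  "m8 E18 = E10" |
  "m8 E19 = E18" |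
  "m8 E20 = E13" |
  "m8 E21 = E16" |
  "m8 E22 = E24" |
  "m8 E23 = E2" |
  "m8 E24 = E5"

primrec m9 :: "f \<Rightarrow> f" where
  "m9 E0 = E0" |
  "m9 E1 = E9" |
  "m9 E2 = E13" |
  "m9 E3 = E17" |
  "m9 E4 = E21" |
  "m9 E5 = E22" |
  "m9 E6 = E1" |
  "m9 E7 = E5" |
  "m9 E8 = E14" |
  "m9 E9 = E18" |
  "m9 E10 = E19" |
  "m9 E11 = E23" |
  "m9 E12 = E2" |
  "m9 E13 = E6" |
  "m9 E14 = E10" |
  "m9 E15 = E11" |
  "m9 E16 = E15" |
  "m9 E17 = E24" |
  "m9 E18 = E3" |
  "m9 E19 = E7" |
  "m9 E20 = E8" |
  "m9 E21 = E12" |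
  "m9 E22 = E16" |
  "m9 E23 = E20" |
  "m9 E24 = E4"

primrec m10 :: "f \<Rightarrow> f" where
  "m10 E0 = E0" |
  "m10 E1 = E10" |
  "m10 E2 = E20" |
  "m10 E3 = E5" |
  "m10 E4 = E15" |
  "m10 E5 = E4" |
  "m10 E6 = E14" |
  "m10 E7 = E24" |
  "m10 E8 = E9" |
  "m10 E9 = E19" |
  "m10 E10 = E3" |
  "m10 E11 = E13" |
  "m10 E12 = E23" |
  "m10 E13 = E8" |
  "m10 E14 = E18" |
  "m10 E15 = E2" |
  "m10 E16 = E12" |
  "m10 E17 = E22" |
  "m10 E18 = E7" |
  "m10 E19 = E17" |
  "m10 E20 = E1" |
  "m10 E21 = E11" |
  "m10 E22 = E21" |
  "m10 E23 = E6" |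
  "m10 E24 = E16"

primrec m11 :: "f \<Rightarrow> f" where
  "m11 E0 = E0" |
  "m11 E1 = E11" |
  "m11 E2 = E22" |
  "m11 E3 = E8" |
  "m11 E4 = E19" |
  "m11 E5 = E9" |
  "m11 E6 = E15" |
  "m11 E7 = E1" |
  "m11 E8 = E12" |
  "m11 E9 = E23" |
  "m11 E10 = E13" |
  "m11 E11 = E24" |
  "m11 E12 = E5" |
  "m11 E13 = E16" |
  "m11 E14 = E2" |
  "m11 E15 = E17" |
  "m11 E16 = E3" |
  "m11 E17 = E14" |
  "m11 E18 = E20" |
  "m11 E19 = E6" |
  "m11 E20 = E21" |
  "m11 E21 = E7" |
  "m11 E22 = E18" |
  "m11 E23 = E4" |
  "m11 E24 = E10"

primrec m12 :: "f \<Rightarrow> f" where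
  "m12 E0 = E0" |
  "m12 E1 = E12" |
  "m12 E2 = E24" |
  "m12 E3 = E6" |
  "m12 E4 = E18" |
  "m12 E5 = E14" |
  "m12 E6 = E21" |
  "m12 E7 = E8" |
  "m12 E8 = E15" |
  "m12 E9 = E2" |
  "m12 E10 = E23" |
  "m12 E11 = E5" |
  "m12 E12 = E17" |
  "m12 E13 = E4" |
  "m12 E14 = E11" |
  "m12 E15 = E7" |
  "m12 E16 = E19" |
  "m12 E17 = E1" |
  "m12 E18 = E13" |
  "m12 E19 = E20" |
  "m12 E20 = E16" |
  "m12 E21 = E3" |
  "m12 E22 = E10" |
  "m12 E23 = E22" |
  "m12 E24 = E9"

primrec m13 :: "f \<Rightarrow> f" where
  "m13 E0 = E0" |
  "m13 E1 = E13" |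
  "m13 E2 = E21" |
  "m13 E3 = E9" |
  "m13 E4 = E17" |
  "m13 E5 = E19" |
  "m13 E6 = E2" |
  "m13 E7 = E10" |
  "m13 E8 = E23" |
  "m13 E9 = E6" |
  "m13 E10 = E8" |
  "m13 E11 = E16" |
  "m13 E12 = E4" |
  "m13 E13 = E12" |
  "m13 E14 = E20" |
  "m13 E15 = E22" |
  "m13 E16 = E5" |
  "m13 E17 = E18" |
  "m13 E18 = E1" |
  "m13 E19 = E14" |
  "m13 E20 = E11" |
  "m13 E21 = E24" |
  "m13 E22 = E7" |
  "m13 E23 = E15" |
  "m13 E24 = E3"

primrec m14 :: "f \<Rightarrow> f" where
  "m14 E0 = E0" |
  "m14 E1 = E14" |
  "m14 E2 = E23" |
  "m14 E3 = E7" |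
  "m14 E4 = E16" |
  "m14 E5 = E24" |
  "m14 E6 = E8" |
  "m14 E7 = E17" |
  "m14 E8 = E1" |
  "m14 E9 = E10" |
  "m14 E10 = E18" |
  "m14 E11 = E2" |
  "m14 E12 = E11" |
  "m14 E13 = E20" |
  "m14 E14 = E9" |
  "m14 E15 = E12" |
  "m14 E16 = E21" |
  "m14 E17 = E5" |
  "m14 E18 = E19" |
  "m14 E19 = E3" |
  "m14 E20 = E6" |
  "m14 E21 = E15" |
  "m14 E22 = E4" |
  "m14 E23 = E13" |
  "m14 E24 = E22"

primrec m15 :: "f \<Rightarrow> f" where
  "m15 E0 = E0" |
  "m15 E1 = E15" |
  "m15 E2 = E5" |
  "m15 E3 = E20" |
  "m15 E4 = E10" |
  "m15 E5 = E1" |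
  "m15 E6 = E16" |
  "m15 E7 = E6" |
  "m15 E8 = E21" |
  "m15 E9 = E11" |
  "m15 E10 = E2" |
  "m15 E11 = E17" |
  "m15 E12 = E7" |
  "m15 E13 = E22" |
  "m15 E14 = E12" |
  "m15 E15 = E3" |
  "m15 E16 = E18" |
  "m15 E17 = E8" |
  "m15 E18 = E23" |
  "m15 E19 = E13" |
  "m15 E20 = E4" |
  "m15 E21 = E19" |
  "m15 E22 = E9" |
  "m15 E23 = E24" |
  "m15 E24 = E14"

primrec m16 :: "f \<Rightarrow> f" where
  "m16 E0 = E0" |
  "m16 E1 = E16" |
  "m16 E2 = E7" |
  "m16 E3 = E23" |
  "m16 E4 = E14" |
  "m16 E5 = E6" |
  "m16 E6 = E22" |
  "m16 E7 = E13" |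
  "m16 E8 = E4" |
  "m16 E9 = E15" |
  "m16 E10 = E12" |
  "m16 E11 = E3" |
  "m16 E12 = E19" |
  "m16 E13 = E5" |
  "m16 E14 = E21" |
  "m16 E15 = E18" |
  "m16 E16 = E9" |
  "m16 E17 = E20" |
  "m16 E18 = E11" |
  "m16 E19 = E2" |
  "m16 E20 = E24" |
  "m16 E21 = E10" |
  "m16 E22 = E1" |
  "m16 E23 = E17" |
  "m16 E24 = E8"

primrec m17 :: "f \<Rightarrow> f" where
  "m17 E0 = E0" |
  "m17 E1 = E17" |
  "m17 E2 = E9" |
  "m17 E3 = E21" |
  "m17 E4 = E13" |
  "m17 E5 = E11" |
  "m17 E6 = E3" |
  "m17 E7 = E15" |
  "m17 E8 = E7" |
  "m17 E9 = E24" |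
  "m17 E10 = E22" |
  "m17 E11 = E14" |
  "m17 E12 = E1" |
  "m17 E13 = E18" |
  "m17 E14 = E5" |
  "m17 E15 = E8" |
  "m17 E16 = E20" |
  "m17 E17 = E12" |
  "m17 E18 = E4" |
  "m17 E19 = E16" |
  "m17 E20 = E19" |
  "m17 E21 = E6" |
  "m17 E22 = E23" |
  "m17 E23 = E10" |
  "m17 E24 = E2"

primrec m18 :: "f \<Rightarrow> f" where
  "m18 E0 = E0" |
  "m18 E1 = E18" |
  "m18 E2 = E6" |
  "m18 E3 = E24" |
  "m18 E4 = E12" |
  "m18 E5 = E16" |
  "m18 E6 = E9" |
  "m18 E7 = E22" |
  "m18 E8 = E10" |
  "m18 E9 = E3" |
  "m18 E10 = E7" |
  "m18 E11 = E20" |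
  "m18 E12 = E13" |
  "m18 E13 = E1" |
  "m18 E14 = E19" |
  "m18 E15 = E23" |
  "m18 E16 = E11" |
  "m18 E17 = E4" |
  "m18 E18 = E17" |
  "m18 E19 = E5" |
  "m18 E20 = E14" |
  "m18 E21 = E2" |
  "m18 E22 = E15" |
  "m18 E23 = E8" |
  "m18 E24 = E21"

primrec m19 :: "f \<Rightarrow> f" where
  "m19 E0 = E0" |
  "m19 E1 = E19" |
  "m19 E2 = E8" |
  "m19 E3 = E22" |
  "m19 E4 = E11" |
  "m19 E5 = E21" |
  "m19 E6 = E10" |
  "m19 E7 = E4" |
  "m19 E8 = E18" |
  "m19 E9 = E7" |
  "m19 E10 = E17" |
  "m19 E11 = E6" |
  "m19 E12 = E20" |
  "m19 E13 = E14" |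
  "m19 E14 = E3" |
  "m19 E15 = E13" |
  "m19 E16 = E2" |
  "m19 E17 = E16" |
  "m19 E18 = E5" |
  "m19 E19 = E24" |
  "m19 E20 = E9" |
  "m19 E21 = E23" |
  "m19 E22 = E12" |
  "m19 E23 = E1" |
  "m19 E24 = E15"

primrec m20 :: "f \<Rightarrow> f" where
  "m20 E0 = E0" |
  "m20 E1 = E20" |
  "m20 E2 = E15" |
  "m20 E3 = E10" |
  "m20 E4 = E5" |
  "m20 E5 = E3" |
  "m20 E6 = E23" |
  "m20 E7 = E18" |
  "m20 E8 = E13" |
  "m20 E9 = E8" |
  "m20 E10 = E1" |
  "m20 E11 = E21" |
  "m20 E12 = E16" |
  "m20 E13 = E11" |
  "m20 E14 = E6" |
  "m20 E15 = E4" |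
  "m20 E16 = E24" |
  "m20 E17 = E19" |
  "m20 E18 = E14" |
  "m20 E19 = E9" |
  "m20 E20 = E2" |
  "m20 E21 = E22" |
  "m20 E22 = E17" |
  "m20 E23 = E12" |
  "m20 E24 = E7"

primrec m21 :: "f \<Rightarrow> f" where
  "m21 E0 = E0" |
  "m21 E1 = E21" |
  "m21 E2 = E17" |
  "m21 E3 = E13" |
  "m21 E4 = E9" |
  "m21 E5 = E8" |
  "m21 E6 = E4" |
  "m21 E7 = E20" |
  "m21 E8 = E16" |
  "m21 E9 = E12" |
  "m21 E10 = E11" |
  "m21 E11 = E7" |
  "m21 E12 = E3" |
  "m21 E13 = E24" |
  "m21 E14 = E15" |
  "m21 E15 = E19" |
  "m21 E16 = E10" |
  "m21 E17 = E6" |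
  "m21 E18 = E2" |
  "m21 E19 = E23" |
  "m21 E20 = E22" |
  "m21 E21 = E18" |
  "m21 E22 = E14" |
  "m21 E23 = E5" |
  "m21 E24 = E1"

primrec m22 :: "f \<Rightarrow> f" where
  "m22 E0 = E0" |
  "m22 E1 = E22" |
  "m22 E2 = E19" |
  "m22 E3 = E11" |
  "m22 E4 = E8" |
  "m22 E5 = E13" |
  "m22 E6 = E5" |
  "m22 E7 = E2" |
  "m22 E8 = E24" |
  "m22 E9 = E16" |
  "m22 E10 = E21" |
  "m22 E11 = E18" |
  "m22 E12 = E10" |
  "m22 E13 = E7" |
  "m22 E14 = E4" |
  "m22 E15 = E9" |
  "m22 E16 = E1" |
  "m22 E17 = E23" |
  "m22 E18 = E15" |
  "m22 E19 = E12" |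
  "m22 E20 = E17" |
  "m22 E21 = E14" |
  "m22 E22 = E6" |
  "m22 E23 = E3" |
  "m22 E24 = E20"

primrec m23 :: "f \<Rightarrow> f" where
  "m23 E0 = E0" |
  "m23 E1 = E23" |
  "m23 E2 = E16" |
  "m23 E3 = E14" |
  "m23 E4 = E7" |
  "m23 E5 = E18" |
  "m23 E6 = E11" |
  "m23 E7 = E9" |
  "m23 E8 = E2" |
  "m23 E9 = E20" |
  "m23 E10 = E6" |
  "m23 E11 = E4" |
  "m23 E12 = E22" |
  "m23 E13 = E15" |
  "m23 E14 = E13" |
  "m23 E15 = E24" |
  "m23 E16 = E17" |
  "m23 E17 = E10" |
  "m23 E18 = E8" |
  "m23 E19 = E1" |
  "m23 E20 = E12" |
  "m23 E21 = E5" |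
  "m23 E22 = E3" |
  "m23 E23 = E21" |
  "m23 E24 = E19"

primrec m24 :: "f \<Rightarrow> f" where
  "m24 E0 = E0" |
  "m24 E1 = E24" |
  "m24 E2 = E18" |
  "m24 E3 = E12" |
  "m24 E4 = E6" |
  "m24 E5 = E23" |
  "m24 E6 = E17" |
  "m24 E7 = E11" |
  "m24 E8 = E5" |
  "m24 E9 = E4" |
  "m24 E10 = E16" |
  "m24 E11 = E10" |
  "m24 E12 = E9" |
  "m24 E13 = E3" |
  "m24 E14 = E22" |
  "m24 E15 = E14" |
  "m24 E16 = E8" |
  "m24 E17 = E2" |
  "m24 E18 = E21" |
  "m24 E19 = E15" |
  "m24 E20 = E7" |
  "m24 E21 = E1" |
  "m24 E22 = E20" |
  "m24 E23 = E19" |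
  "m24 E24 = E13"

primrec fm :: "f \<Rightarrow> f \<Rightarrow> f" where
  "fm E0 = m0" |
  "fm E1 = m1" |
  "fm E2 = m2" |
  "fm E3 = m3" |
  "fm E4 = m4" |
  "fm E5 = m5" |
  "fm E6 = m6" |
  "fm E7 = m7" |
  "fm E8 = m8" |
  "fm E9 = m9" |
  "fm E10 = m10" |
  "fm E11 = m11" |
  "fm E12 = m12" |
  "fm E13 = m13" |
  "fm E14 = m14" |
  "fm E15 = m15" |
  "fm E16 = m16" |
  "fm E17 = m17" |
  "fm E18 = m18" |
  "fm E19 = m19" |
  "fm E20 = m20" |
  "fm E21 = m21" |
  "fm E22 = m22" |
  "fm E23 = m23" |
  "fm E24 = m24"

primrec fneg :: "f \<Rightarrow> f" where
  "fneg E0 = E0" |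
  "fneg E1 = E4" |
  "fneg E2 = E3" |
  "fneg E3 = E2" |
  "fneg E4 = E1" |
  "fneg E5 = E20" |
  "fneg E6 = E24" |
  "fneg E7 = E23" |
  "fneg E8 = E22" |
  "fneg E9 = E21" |
  "fneg E10 = E15" |
  "fneg E11 = E19" |
  "fneg E12 = E18" |
  "fneg E13 = E17" |
  "fneg E14 = E16" |
  "fneg E15 = E10" |
  "fneg E16 = E14" |
  "fneg E17 = E13" |
  "fneg E18 = E12" |
  "fneg E19 = E11" |
  "fneg E20 = E5" |
  "fneg E21 = E9" |
  "fneg E22 = E8" |
  "fneg E23 = E7" |
  "fneg E24 = E6"

primrec finv :: "f \<Rightarrow> f" where
  "finv E0 = E0" |
  "finv E1 = E1" |
  "finv E2 = E3" |
  "finv E3 = E2" |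
  "finv E4 = E4" |
  "finv E5 = E15" |
  "finv E6 = E9" |
  "finv E7 = E11" |
  "finv E8 = E14" |
  "finv E9 = E6" |
  "finv E10 = E20" |
  "finv E11 = E7" |
  "finv E12 = E17" |
  "finv E13 = E18" |
  "finv E14 = E8" |
  "finv E15 = E5" |
  "finv E16 = E22" |
  "finv E17 = E12" |
  "finv E18 = E13" |
  "finv E19 = E23" |
  "finv E20 = E10" |
  "finv E21 = E24" |
  "finv E22 = E16" |
  "finv E23 = E19" |
  "finv E24 = E21"

primrec rw :: "f \<Rightarrow> f \<Rightarrow> bool" where
  "rw E0 c = (c \<in> {E0, E1, E2, E3, E4, E5, E6, E11, E14, E15, E17, E18, E19, E20, E21, E22, E24})" |
  "rw E1 c = (c \<in> {E0, E1, E2, E3, E4, E6, E7, E9, E10, E12, E14, E15, E17, E20, E22, E23, E24})" |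
  "rw E2 c = (c \<in> {E0, E1, E2, E3, E4, E5, E6, E8, E12, E13, E14, E16, E18, E20, E21, E22, E23})" |
  "rw E3 c = (c \<in> {E0, E1, E3, E6, E7, E8, E10, E11, E12, E13, E18, E19, E20, E21, E22, E24})" |
  "rw E4 c = (c \<in> {E1, E2, E4, E7, E8, E9, E10, E14, E15, E16, E17, E20, E21, E22, E23, E24})" |
  "rw E5 c = (c \<in> {E4, E5, E8, E9, E10, E11, E13, E14, E15, E16, E17, E19, E20, E21, E22, E23, E24})" |
  "rw E6 c = (c \<in> {E0, E1, E2, E4, E5, E7, E11, E12, E14, E16, E18, E20, E21, E22, E23, E24})" |
  "rw E7 c = (c \<in> {E2, E3, E4, E8, E9, E10, E12, E13, E15, E16, E18, E19, E20, E21, E22, E24})" |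
  "rw E8 c = (c \<in> {E0, E1, E3, E7, E8, E11, E12, E14, E15, E16, E17, E18, E21, E22, E24})" |
  "rw E9 c = (c \<in> {E0, E1, E3, E5, E6, E7, E9, E10, E12, E13, E15, E17, E23, E24})" |
  "rw E10 c = (c \<in> {E0, E1, E4, E5, E6, E7, E8, E9, E10, E12, E13, E14, E18, E19, E20, E22, E23})" |
  "rw E11 c = (c \<in> {E2, E5, E6, E7, E8, E9, E10, E11, E12, E14, E15, E16, E17, E19, E21, E22, E23})" |
  "rw E12 c = (c \<in> {E1, E4, E5, E6, E7, E8, E9, E11, E13, E15, E17, E18, E20, E21, E23, E24})" |
  "rw E13 c = (c \<in> {E0, E1, E2, E3, E5, E7, E8, E9, E10, E13, E14, E17, E18, E21, E23, E24})" |
  "rw E14 c = (c \<in> {E0, E2, E4, E6, E7, E10, E11, E12, E13, E15, E18, E19, E20, E21, E22, E24})" |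
  "rw E15 c = (c \<in> {E1, E2, E3, E4, E6, E7, E8, E10, E12, E14, E16, E17, E18, E19, E23, E24})" |
  "rw E16 c = (c \<in> {E0, E1, E2, E3, E4, E5, E6, E7, E11, E13, E15, E16, E17, E19, E20, E22, E24})" |
  "rw E17 c = (c \<in> {E0, E2, E3, E4, E5, E7, E8, E9, E10, E11, E13, E14, E16, E17, E18, E19, E22})" |
  "rw E18 c = (c \<in> {E0, E1, E2, E3, E4, E5, E7, E8, E11, E13, E15, E16, E17, E18, E19, E21})" |
  "rw E19 c = (c \<in> {E0, E2, E3, E5, E6, E8, E9, E10, E12, E14, E15, E17, E19, E20})" |
  "rw E20 c = (c \<in> {E0, E3, E4, E7, E8, E9, E10, E12, E15, E16, E18, E19, E22})" |
  "rw E21 c = (c \<in> {E1, E2, E5, E6, E9, E10, E11, E12, E13, E14, E15, E18, E19, E22, E24})" |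
  "rw E22 c = (c \<in> {E0, E1, E3, E6, E9, E10, E11, E12, E13, E14, E16, E17, E18, E20, E23, E24})" |
  "rw E23 c = (c \<in> {E1, E2, E4, E5, E6, E9, E11, E12, E13, E14, E16, E17, E18, E20, E21, E22, E23})" |
  "rw E24 c = (c \<in> {E0, E4, E5, E6, E7, E8, E10, E12, E13, E14, E15, E16, E17, E19, E20, E23, E24})"

definition r0 :: "f \<Rightarrow> bool" where "r0 c = (c \<in> {E0, E5, E6, E7, E9, E10, E11, E14, E15, E17, E18, E20, E21, E22, E23, E24})"

fun inA :: "f \<times> f \<times> f \<Rightarrow> bool" where
  "inA (a,b,c) = (if a = E1 then rw b c else if a = E0 \<and> b = E1 then r0 c else a = E0 \<and> b = E0 \<and> c = E1 \<and> True)"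

definition enumF :: "f list" where "enumF = [E0, E1, E2, E3, E4, E5, E6, E7, E8, E9, E10, E11, E12, E13, E14, E15, E16, E17, E18, E19, E20, E21, E22, E23, E24]"


fun nv :: "f \<times> f \<times> f \<Rightarrow> bool" where
  "nv (a,b,c) = (a = E1 \<or> (a = E0 \<and> b = E1) \<or> (a = E0 \<and> b = E0 \<and> c = E1))"

fun cnorm :: "f \<times> f \<times> f \<Rightarrow> f \<times> f \<times> f" where
  "cnorm (a,b,c) = (if a \<noteq> E0 then (E1, fm (finv a) b, fm (finv a) c)
     else if b \<noteq> E0 then (E0, E1, fm (finv b) c) else (E0, E0, E1))"

fun ku :: "f \<times> f \<times> f \<Rightarrow> f \<times> f \<times> f" where
  "ku (a,b,c) = (if a = E1 then (fneg b, E1, E0) else (E1, E0, E0))"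

fun kw :: "f \<times> f \<times> f \<Rightarrow> f \<times> f \<times> f" where
  "kw (a,b,c) = (if a = E1 then (fneg c, E0, E1) else if b = E1 then (E0, fneg c, E1) else (E0, E1, E0))"

fun lin :: "f \<times> f \<times> f \<Rightarrow> f \<Rightarrow> f \<times> f \<times> f \<Rightarrow> f \<times> f \<times> f" where
  "lin (a,b,c) s (x,y,z) = (fa a (fm s x), fa b (fm s y), fa c (fm s z))"

definition lc :: "f \<times> f \<times> f \<Rightarrow> nat" where
  "lc m = length (filter (\<lambda>s. inA (cnorm (lin (ku m) s (kw m)))) enumF) + (if inA (cnorm (kw m)) then 1 else 0)"


lemma lc1: "lc (E1, b, c) \<le> 18"
  by (cases b; cases c) (simp_all add: lc_def enumF_def r0_def)
lemma lc2: "lc (E0, E1, c) \<le> 18"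
  by (cases c) (simp_all add: lc_def enumF_def r0_def)
lemma lc3: "lc (E0, E0, E1) \<le> 18"
  by (simp add: lc_def enumF_def r0_def)
lemma lc_all: "nv m \<Longrightarrow> lc m \<le> 18"
  by (cases m) (auto simp: lc1 lc2 lc3)

lemma code_fa: "code (fa x y) = (code x mod 5 + code y mod 5) mod 5 + 5 * ((code x div 5 + code y div 5) mod 5)"
  by (cases x; cases y) simp_all

lemma code_fm: "code (fm x y) = (code x mod 5 * (code y mod 5) + 2 * (code x div 5) * (code y div 5)) mod 5
   + 5 * ((code x mod 5 * (code y div 5) + code x div 5 * (code y mod 5)) mod 5)"
  by (cases x; cases y) simp_all

lemma fa_fneg: "fa (fneg x) x = E0"
  by (cases x) simp_all

lemma fm_finv: "x \<noteq> E0 \<Longrightarrow> fm x (finv x) = E1"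
  by (cases x) simp_all

lemma code_lt: "code x < 25"
  by (cases x) simp_all

lemma code_inj: "code x = code y \<Longrightarrow> x = y"
  by (cases x; cases y) simp_all

lemma code_E0: "code E0 = 0" and code_E1: "code E1 = 1" by simp_all

lemma UNIV_f: "(UNIV :: f set) = set enumF"
proof -
  have "x \<in> set enumF" for x by (cases x) (simp_all add: enumF_def)
  then show ?thesis by auto
qed

lemma distinct_enumF: "distinct enumF"
  by (simp add: enumF_def)

instance f :: finite
  by standard (simp add: UNIV_f)

lemma card_f: "card (UNIV :: f set) = 25"
  using distinct_card[OF distinct_enumF] by (simp add: UNIV_f enumF_def)

lemma card_filter: "card {s. P s} = length (filter P enumF)"
proof -
  have "{s. P s} = set (filter P enumF)" using UNIV_f by auto
  then show ?thesis using distinct_card[OF distinct_filter[OF distinct_enumF]] by simp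
qed

lemma sum_f: "(\<Sum>a\<in>(UNIV::f set). g a) = sum_list (map g enumF)"
  by (simp add: UNIV_f sum_list_distinct_conv_sum_set[OF distinct_enumF])

lemma inA_nv3: "inA (a,b,c) \<Longrightarrow> nv (a,b,c)"
  apply (simp only: inA.simps nv.simps)
  apply (cases "a = E1")
   apply simp
  apply (cases "a = E0 \<and> b = E1")
   apply simp
  apply simp
  done

lemma inA_nv: "inA v \<Longrightarrow> nv v"
  by (cases v rule: prod_cases3) (simp only: inA_nv3)

lemma card_inA_gen: "card {v. inA v \<and> Q v} = (\<Sum>a\<in>(UNIV::f set). \<Sum>b\<in>(UNIV::f set). card {c. inA (a,b,c) \<and> Q (a,b,c)})"
proof -
  have "{v. inA v \<and> Q v} = Sigma UNIV (\<lambda>a. Sigma UNIV (\<lambda>b. {c. inA (a,b,c) \<and> Q (a,b,c)}))" by auto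
  then show ?thesis by (simp add: card_SigmaI)
qed

definition K :: "(f \<times> f \<times> f \<Rightarrow> bool) \<Rightarrow> f \<Rightarrow> f \<Rightarrow> nat" where
  "K Q a b = card {c. inA (a,b,c) \<and> Q (a,b,c)}"

lemma card_inA_list: "card {v. inA v \<and> Q v} = sum_list (map (\<lambda>a. sum_list (map (\<lambda>b. K Q a b) enumF)) enumF)"
  unfolding card_inA_gen sum_f K_def ..

lemma card_A: "card {v. inA v} = 418"
proof -
  have "card {v. inA v} = card {v. inA v \<and> True}" by simp
  also have "\<dots> = sum_list (map (\<lambda>a. sum_list (map (\<lambda>b. K (\<lambda>_. True) a b) enumF)) enumF)"
    by (rule card_inA_list)
  also have "\<dots> = 418"
    unfolding enumF_def list.map by (simp add: K_def card_filter enumF_def r0_def)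
  finally show ?thesis .
qed

lemma card_A0: "card {v. inA v \<and> snd (snd v) = E0} = 18"
proof -
  have "card {v. inA v \<and> snd (snd v) = E0} = sum_list (map (\<lambda>a. sum_list (map (\<lambda>b. K (\<lambda>v. snd (snd v) = E0) a b) enumF)) enumF)"
    by (rule card_inA_list)
  also have "\<dots> = 18"
    unfolding enumF_def list.map by (simp add: K_def card_filter enumF_def r0_def)
  finally show ?thesis .
qed


lemma char5:
  assumes "CARD('a::{field,finite}) = 25"
  shows "CHAR('a) = 5"
proof -
  have d: "CHAR('a) dvd 5^2" using CHAR_dvd_CARD[where 'a='a] assms by simp
  have pos: "CHAR('a) > 0" by (simp add: finite_imp_CHAR_pos)
  have pr: "prime CHAR('a)" using prime_CHAR_semidom[OF pos] .
  have "CHAR('a) dvd 5" using prime_dvd_power[OF pr d] .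
  moreover have "prime (5::nat)" by (simp add: prime_nat_iff' atLeastLessThan_nat_numeral)
  ultimately show ?thesis using pr primes_dvd_imp_eq by blast
qed

lemma of_nat_eq5:
  assumes "CARD('a::{field,finite}) = 25"
  shows "(of_nat m :: 'a) = of_nat n \<longleftrightarrow> m mod 5 = n mod 5"
  using of_nat_eq_iff_cong_CHAR[where 'a='a] char5[OF assms] by (simp add: cong_def)

lemma pow4_mod5: "(j::nat) mod 5 \<noteq> 0 \<Longrightarrow> j^4 mod 5 = 1"
proof -
  assume h: "j mod 5 \<noteq> 0"
  have "j^4 mod 5 = (j mod 5)^4 mod 5" by (simp add: power_mod)
  moreover have "j mod 5 \<in> {1,2,3,4}" using h by auto
  ultimately show ?thesis by auto
qed

context
  fixes dummy :: "'a::{field,finite}"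
  assumes card25: "CARD('a) = 25"
begin

lemma eq5: "(of_nat m :: 'a) = of_nat n \<longleftrightarrow> m mod 5 = n mod 5"
  by (rule of_nat_eq5[OF card25])

lemma mod5: "(of_nat (m mod 5) :: 'a) = of_nat m"
  by (simp add: eq5)

lemma five0: "(of_nat (5 * k) :: 'a) = 0"
  using eq5[of "5*k" 0] by simp

lemma pf_sub: "(of_nat i :: 'a) - of_nat j = of_nat (i + 4 * j)"
proof -
  have "(of_nat (i + 4*j) :: 'a) = of_nat i + of_nat (5*j) - of_nat j" by (simp add: algebra_simps)
  then show ?thesis using five0[of j] by simp
qed

lemma pf_div: "(of_nat i :: 'a) / of_nat j = of_nat (i * j^3)"
proof (cases "(of_nat j :: 'a) = 0")
  case True then show ?thesis by simp
next
  case False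
  then have "j mod 5 \<noteq> 0" using eq5[of j 0] by simp
  then have "j^4 mod 5 = 1" by (rule pow4_mod5)
  then have "(of_nat (j^4) :: 'a) = 1" using eq5[of "j^4" 1] by simp
  then have "(of_nat j :: 'a) * of_nat (j^3) = 1" by (simp add: power_Suc[symmetric] of_nat_mult[symmetric] numeral_eq_Suc del: of_nat_mult power_Suc)
  then have "inverse (of_nat j :: 'a) = of_nat (j^3)" by (simp add: inverse_unique)
  then show ?thesis by (simp add: divide_inverse)
qed

lemma pf_indep:
  assumes s: "\<And>k. s \<noteq> (of_nat k :: 'a)"
    and e: "of_nat a + of_nat b * s = (of_nat c + of_nat d * s :: 'a)"
  shows "a mod 5 = c mod 5 \<and> b mod 5 = d mod 5"
proof (cases "b mod 5 = d mod 5")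
  case True
  then have "(of_nat b :: 'a) = of_nat d" by (simp add: eq5)
  then have "(of_nat a :: 'a) = of_nat c" using e by simp
  then show ?thesis using True by (simp add: eq5)
next
  case False
  then have nz: "(of_nat b :: 'a) - of_nat d \<noteq> 0" by (simp add: eq5)
  have "((of_nat b :: 'a) - of_nat d) * s = of_nat c - of_nat a" using e by (simp add: algebra_simps)
  then have "s = (of_nat c - of_nat a) / (of_nat b - of_nat d)" using nz by (simp add: field_simps)
  also have "\<dots> = of_nat ((c + 4*a) * (b + 4*d)^3)" by (simp only: pf_sub pf_div)
  finally show ?thesis using s by blast
qed

lemma exists_sqrt2: "\<exists>r::'a. r * r = 2 \<and> (\<forall>k. r \<noteq> of_nat k)"
proof -
  have "range (of_nat :: nat \<Rightarrow> 'a) = of_nat ` {..<5}"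
  proof
    show "range (of_nat :: nat \<Rightarrow> 'a) \<subseteq> of_nat ` {..<5}"
    proof
      fix x assume "x \<in> range (of_nat :: nat \<Rightarrow> 'a)"
      then obtain k where "x = of_nat k" by auto
      then have "x = of_nat (k mod 5)" by (simp add: mod5)
      then show "x \<in> of_nat ` {..<5}" by auto
    qed
  qed auto
  then have "card (range (of_nat :: nat \<Rightarrow> 'a)) \<le> 5"
    using card_image_le[of "{..<5::nat}" "of_nat :: nat \<Rightarrow> 'a"] by simp
  then have "range (of_nat :: nat \<Rightarrow> 'a) \<noteq> UNIV" using card25 by auto
  then obtain s :: 'a where s: "\<And>k. s \<noteq> of_nat k" by auto
  define \<phi> where "\<phi> = (\<lambda>(i,j). (of_nat i + of_nat j * s :: 'a))"
  have inj: "inj_on \<phi> ({..<5} \<times> {..<5})"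
  proof (rule inj_onI)
    fix x y assume hx: "x \<in> {..<5::nat} \<times> {..<5::nat}" and hy: "y \<in> {..<5::nat} \<times> {..<5::nat}"
      and e: "\<phi> x = \<phi> y"
    obtain i j where x: "x = (i,j)" by (cases x)
    obtain i' j' where y: "y = (i',j')" by (cases y)
    have "of_nat i + of_nat j * s = of_nat i' + of_nat j' * s" using e by (simp add: \<phi>_def x y)
    from pf_indep[OF s this] have "i mod 5 = i' mod 5 \<and> j mod 5 = j' mod 5" .
    then show "x = y" using hx hy by (simp add: x y)
  qed
  then have "card (\<phi> ` ({..<5} \<times> {..<5})) = 25" by (simp add: card_image)
  then have "\<phi> ` ({..<5} \<times> {..<5}) = UNIV" using card25
    by (intro card_subset_eq) auto
  then have "s * s \<in> \<phi> ` ({..<5} \<times> {..<5})" by simp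
  then obtain p where "s * s = \<phi> p" by blast
  then obtain a b where ss: "s * s = of_nat a + of_nat b * s"
    by (cases p) (auto simp: \<phi>_def)
  define t where "t = s + of_nat (2*b)"
  have "t * t = s * s + of_nat (4*b) * s + of_nat (4*b*b)" by (simp add: t_def algebra_simps)
  also have "\<dots> = of_nat a + of_nat (5*b) * s + of_nat (4*b*b)" by (simp add: ss algebra_simps)
  also have "\<dots> = of_nat (a + 4*b*b)" using five0[of b] by simp
  finally have tt: "t * t = of_nat ((a + 4*b*b) mod 5)" by (simp add: mod5)
  have tn: "t \<noteq> of_nat k" for k
  proof
    assume "t = of_nat k"
    then have "s = of_nat k - of_nat (2*b)" by (simp add: t_def eq_diff_eq)
    then show False using s[of "k + 4*(2*b)"] pf_sub[of k "2*b"] by simp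
  qed
  have m: "(a + 4*b*b) mod 5 \<in> {0,1,2,3,4}" by auto
  have sq: False if "t * t = of_nat k * of_nat k" for k
  proof -
    have "(t - of_nat k) * (t + of_nat k) = 0" using that by (simp add: algebra_simps)
    then have "t = of_nat k \<or> t = - of_nat k" by (simp add: eq_neg_iff_add_eq_0)
    moreover have "- (of_nat k :: 'a) = of_nat (4*k)" using pf_sub[of 0 k] by simp
    ultimately show False using tn[of k] tn[of "4*k"] by auto
  qed
  consider "(a + 4*b*b) mod 5 = 0" | "(a + 4*b*b) mod 5 = 1" | "(a + 4*b*b) mod 5 = 2"
    | "(a + 4*b*b) mod 5 = 3" | "(a + 4*b*b) mod 5 = 4" using m by fastforce
  then show ?thesis
  proof cases
    case 1 then show ?thesis using tt sq[of 0] by simp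
  next
    case 2 then show ?thesis using tt sq[of 1] by simp
  next
    case 3 then show ?thesis using tt tn by auto
  next
    case 4
    define r where "r = 2 * t"
    have "r * r = 4 * (t * t)" by (simp add: r_def algebra_simps)
    also have "\<dots> = 4 * 3" using tt 4 by simp
    also have "\<dots> = (of_nat 12 :: 'a)" by simp
    also have "\<dots> = (2::'a)" using eq5[of 12 2] by simp
    finally have rr: "r * r = 2" .
    have "r \<noteq> of_nat k" for k
    proof
      assume "r = of_nat k"
      have "t = of_nat 6 * t" using eq5[of 6 1] by simp
      also have "\<dots> = 3 * r" by (simp add: r_def)
      also have "\<dots> = of_nat (3*k)" using \<open>r = of_nat k\<close> by simp
      finally show False using tn by blast
    qed
    then show ?thesis using rr by blast
  next
    case 5 then show ?thesis using tt sq[of 2] by simp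
  qed
qed

end


definition pt :: "'a::field \<times> 'a \<times> 'a \<Rightarrow> ('a \<times> 'a \<times> 'a) set" where
  "pt v = {vsc c v | c. True}"

fun adot :: "'a::field \<times> 'a \<times> 'a \<Rightarrow> 'a \<times> 'a \<times> 'a \<Rightarrow> 'a" where
  "adot (a,b,c) (x,y,z) = a*x + b*y + c*z"

lemma vsc_vsc: "vsc c (vsc d v) = vsc (c*d) v"
  by (cases v rule: prod_cases3) (simp add: mult.assoc)

lemma vsc_1: "vsc 1 v = v"
  by (cases v rule: prod_cases3) simp

lemma vsc_0: "vsc 0 v = (0,0,0)"
  by (cases v rule: prod_cases3) simp

lemma in_pt: "v \<in> pt v"
  unfolding pt_def using vsc_1[of v] by (metis (mono_tags, lifting) mem_Collect_eq)

lemma pt_scale: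
  assumes "c \<noteq> 0" shows "pt (vsc c v) = pt v"
proof
  show "pt (vsc c v) \<subseteq> pt v" unfolding pt_def by (auto simp: vsc_vsc)
  show "pt v \<subseteq> pt (vsc c v)"
  proof
    fix x assume "x \<in> pt v"
    then obtain d where "x = vsc d v" unfolding pt_def by blast
    then have "x = vsc (d / c) (vsc c v)" using assms by (simp add: vsc_vsc)
    then show "x \<in> pt (vsc c v)" unfolding pt_def by blast
  qed
qed

lemma pt_eq: "pt a = pt b \<Longrightarrow> \<exists>c. a = vsc c b"
  using in_pt[of a] unfolding pt_def by auto

lemma adot_vsc: "adot n (vsc c v) = c * adot n v"
  by (cases n rule: prod_cases3; cases v rule: prod_cases3) (simp add: algebra_simps)

lemma adot_vsc_left: "adot (vsc c n) v = c * adot n v"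
  by (cases n rule: prod_cases3; cases v rule: prod_cases3) (simp add: algebra_simps)

lemma pg_point_pt: "v \<noteq> (0,0,0) \<Longrightarrow> pg_point (pt v)"
  unfolding pg_point_def pt_def by blast

lemma span3:
  fixes u1 u2 u3 w1 w2 w3 x1 x2 x3 :: "'a::field"
  assumes nz: "u1*w2 - u2*w1 \<noteq> 0"
    and d: "(u2*w3 - u3*w2)*x1 + (u3*w1 - u1*w3)*x2 + (u1*w2 - u2*w1)*x3 = 0"
  shows "\<exists>a b. x1 = a*u1 + b*w1 \<and> x2 = a*u2 + b*w2 \<and> x3 = a*u3 + b*w3"
proof -
  define D where "D = u1*w2 - u2*w1"
  define a where "a = (x1*w2 - x2*w1) / D"
  define b where "b = (u1*x2 - u2*x1) / D"
  have D: "D \<noteq> 0" using nz by (simp add: D_def)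
  have n1: "(x1*w2 - x2*w1)*u1 + (u1*x2 - u2*x1)*w1 = x1 * D" unfolding D_def by (simp add: algebra_simps)
  have n2: "(x1*w2 - x2*w1)*u2 + (u1*x2 - u2*x1)*w2 = x2 * D" unfolding D_def by (simp add: algebra_simps)
  have d': "D * x3 = - ((u2*w3 - u3*w2)*x1 + (u3*w1 - u1*w3)*x2)"
    using d unfolding D_def by (metis add.commute eq_neg_iff_add_eq_0)
  have n3: "(x1*w2 - x2*w1)*u3 + (u1*x2 - u2*x1)*w3 = x3 * D"
    using d' by (simp add: algebra_simps)
  have 1: "x1 = a*u1 + b*w1"
  proof -
    have "a*u1 + b*w1 = ((x1*w2 - x2*w1)*u1 + (u1*x2 - u2*x1)*w1) / D"
      unfolding a_def b_def by (simp add: add_divide_distrib)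
    then show ?thesis using n1 D by simp
  qed
  have 2: "x2 = a*u2 + b*w2"
  proof -
    have "a*u2 + b*w2 = ((x1*w2 - x2*w1)*u2 + (u1*x2 - u2*x1)*w2) / D"
      unfolding a_def b_def by (simp add: add_divide_distrib)
    then show ?thesis using n2 D by simp
  qed
  have 3: "x3 = a*u3 + b*w3"
  proof -
    have "a*u3 + b*w3 = ((x1*w2 - x2*w1)*u3 + (u1*x2 - u2*x1)*w3) / D"
      unfolding a_def b_def by (simp add: add_divide_distrib)
    then show ?thesis using n3 D by simp
  qed
  show ?thesis using 1 2 3 by blast
qed

lemma line_normal:
  assumes "pg_line (L :: ('a::field \<times> 'a \<times> 'a) set)"
  shows "\<exists>n. n \<noteq> (0,0,0) \<and> (\<forall>x. x \<in> L \<longleftrightarrow> adot n x = 0)"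
proof -
  obtain u w where ind: "\<forall>a b. vadd (vsc a u) (vsc b w) = (0, 0, 0) \<longrightarrow> a = 0 \<and> b = 0"
    and L: "L = {vadd (vsc s u) (vsc t w) | s t. True}"
    using assms unfolding pg_line_def by blast
  obtain u1 u2 u3 where u: "u = (u1,u2,u3)" by (cases u rule: prod_cases3)
  obtain w1 w2 w3 where w: "w = (w1,w2,w3)" by (cases w rule: prod_cases3)
  define n where "n = (u2*w3 - u3*w2, u3*w1 - u1*w3, u1*w2 - u2*w1)"
  have nz: "n \<noteq> (0,0,0)"
  proof
    assume n0: "n = (0,0,0)"
    then have e1: "u2*w3 = u3*w2" and e2: "u3*w1 = u1*w3" and e3: "u1*w2 = u2*w1" by (auto simp: n_def)
    have "u \<noteq> (0,0,0)"
    proof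
      assume "u = (0,0,0)"
      then have "vadd (vsc 1 u) (vsc 0 w) = (0,0,0)" using w by simp
      then show False using ind[rule_format, of 1 0] by simp
    qed
    then consider "u1 \<noteq> 0" | "u2 \<noteq> 0" | "u3 \<noteq> 0" using u by auto
    then show False
    proof cases
      case 1
      have "vadd (vsc w1 u) (vsc (-u1) w) = (0,0,0)" using e2 e3 u w by (simp add: mult.commute)
      then show False using ind 1 by force
    next
      case 2
      have "vadd (vsc w2 u) (vsc (-u2) w) = (0,0,0)" using e1 e3 u w by (simp add: mult.commute)
      then show False using ind 2 by force
    next
      case 3
      have "vadd (vsc w3 u) (vsc (-u3) w) = (0,0,0)" using e1 e2 u w by (simp add: mult.commute)
      then show False using ind 3 by force
    qed
  qed
  have "x \<in> L \<longleftrightarrow> adot n x = 0" for x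
  proof
    assume "x \<in> L"
    then obtain s t where "x = vadd (vsc s u) (vsc t w)" using L by blast
    then show "adot n x = 0" using u w by (simp add: n_def algebra_simps)
  next
    assume h: "adot n x = 0"
    obtain x1 x2 x3 where x: "x = (x1,x2,x3)" by (cases x rule: prod_cases3)
    have hd: "(u2*w3 - u3*w2)*x1 + (u3*w1 - u1*w3)*x2 + (u1*w2 - u2*w1)*x3 = 0"
      using h x by (simp add: n_def)
    have "\<exists>a b. x1 = a*u1 + b*w1 \<and> x2 = a*u2 + b*w2 \<and> x3 = a*u3 + b*w3"
    proof -
      consider "u1*w2 - u2*w1 \<noteq> 0" | "u2*w3 - u3*w2 \<noteq> 0" | "u3*w1 - u1*w3 \<noteq> 0"
        using nz by (auto simp: n_def)
      then show ?thesis
      proof cases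
        case 1 then show ?thesis using span3[OF 1 hd] by blast
      next
        case 2
        have "(u3*w1 - u1*w3)*x2 + (u1*w2 - u2*w1)*x3 + (u2*w3 - u3*w2)*x1 = 0" using hd by (simp add: algebra_simps)
        from span3[OF 2 this] show ?thesis by blast
      next
        case 3
        have "(u1*w2 - u2*w1)*x3 + (u2*w3 - u3*w2)*x1 + (u3*w1 - u1*w3)*x2 = 0" using hd by (simp add: algebra_simps)
        from span3[OF 3 this] show ?thesis by blast
      qed
    qed
    then obtain a b where "x1 = a*u1 + b*w1" "x2 = a*u2 + b*w2" "x3 = a*u3 + b*w3" by blast
    then have "x = vadd (vsc a u) (vsc b w)" using x u w by simp
    then show "x \<in> L" using L by blast
  qed
  then show ?thesis using nz by blast
qed

lemma pt_sub_iff: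
  assumes "\<forall>x. x \<in> L \<longleftrightarrow> adot n x = 0"
  shows "pt v \<subseteq> L \<longleftrightarrow> adot n v = 0"
proof
  assume "pt v \<subseteq> L" then show "adot n v = 0" using in_pt[of v] assms by blast
next
  assume h: "adot n v = 0"
  show "pt v \<subseteq> L"
  proof
    fix x assume "x \<in> pt v"
    then obtain c where "x = vsc c v" unfolding pt_def by blast
    then have "adot n x = 0" using h by (simp add: adot_vsc)
    then show "x \<in> L" using assms by blast
  qed
qed


section \<open>Embedding the concrete field\<close>

definition Ev :: "'a::field \<Rightarrow> f \<Rightarrow> 'a" where
  "Ev r x = of_nat (code x mod 5) + of_nat (code x div 5) * r"

fun EV3 :: "'a::field \<Rightarrow> f \<times> f \<times> f \<Rightarrow> 'a \<times> 'a \<times> 'a" where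
  "EV3 r (a,b,c) = (Ev r a, Ev r b, Ev r c)"

lemma md5: "((p::nat) mod 5 + 5 * (q mod 5)) mod 5 = p mod 5" by simp
lemma dv5: "((p::nat) mod 5 + 5 * (q mod 5)) div 5 = q mod 5" by simp

locale gf25 =
  fixes r :: "'a::{field,finite}"
  assumes card25: "CARD('a) = 25" and r2: "r * r = 2" and rn: "\<And>k. r \<noteq> of_nat k"
begin

lemma m5: "(of_nat (m mod 5) :: 'a) = of_nat m"
  using of_nat_eq5[OF card25] by simp

lemma Ev_fa: "Ev r (fa x y) = Ev r x + Ev r y"
  unfolding Ev_def code_fa md5 dv5 by (simp add: m5 algebra_simps)

lemma Ev_fm: "Ev r (fm x y) = Ev r x * Ev r y"
proof -
  define a where "a = code x mod 5"
  define b where "b = code x div 5"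
  define c where "c = code y mod 5"
  define d where "d = code y div 5"
  have "Ev r (fm x y) = of_nat (a*c + 2*b*d) + of_nat (a*d + b*c) * r"
    unfolding Ev_def code_fm md5 dv5 m5 a_def b_def c_def d_def by simp
  also have "\<dots> = of_nat a * of_nat c + of_nat b * of_nat d * (r * r) + (of_nat a * of_nat d + of_nat b * of_nat c) * r"
    by (simp add: r2 algebra_simps)
  also have "\<dots> = (of_nat a + of_nat b * r) * (of_nat c + of_nat d * r)"
    by (simp add: algebra_simps)
  finally show ?thesis unfolding Ev_def a_def b_def c_def d_def .
qed

lemma Ev_E0: "Ev r E0 = 0" by (simp add: Ev_def)
lemma Ev_E1: "Ev r E1 = 1" by (simp add: Ev_def)

lemma Ev_fneg: "Ev r (fneg x) = - Ev r x"
proof -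
  have "Ev r (fneg x) + Ev r x = 0" using Ev_fa[of "fneg x" x] by (simp add: fa_fneg Ev_E0)
  then show ?thesis by (simp add: eq_neg_iff_add_eq_0)
qed

lemma Ev_inj: "Ev r x = Ev r y \<Longrightarrow> x = y"
proof -
  assume h: "Ev r x = Ev r y"
  have "code x mod 5 mod 5 = code y mod 5 mod 5 \<and> code x div 5 mod 5 = code y div 5 mod 5"
    using pf_indep[OF card25 rn h[unfolded Ev_def]] .
  moreover have "code x div 5 < 5" "code y div 5 < 5" using code_lt[of x] code_lt[of y] by auto
  ultimately have "code x = code y"
    by (metis div_mod_decomp mod_less mod_mod_trivial)
  then show "x = y" by (rule code_inj)
qed

lemma Ev_inj_iff: "Ev r x = Ev r y \<longleftrightarrow> x = y"
  using Ev_inj by blast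

lemma Ev_zero_iff: "Ev r x = 0 \<longleftrightarrow> x = E0"
  using Ev_inj_iff[of x E0] by (simp add: Ev_E0)

lemma Ev_surj: "\<exists>x. Ev r x = y"
proof -
  have "inj (Ev r)" using Ev_inj by (auto intro: injI)
  then have "card (range (Ev r)) = 25" using card_f by (simp add: card_image)
  then have "range (Ev r) = UNIV" using card25 by (intro card_subset_eq) auto
  then show ?thesis by (metis UNIV_I imageE)
qed

lemma Ev_finv: "x \<noteq> E0 \<Longrightarrow> Ev r (finv x) = inverse (Ev r x)"
proof -
  assume "x \<noteq> E0"
  then have "Ev r x * Ev r (finv x) = 1" using Ev_fm[of x "finv x"] by (simp add: fm_finv Ev_E1)
  then show ?thesis by (simp add: inverse_unique)
qed

lemma E3_zero_iff: "EV3 r v = (0,0,0) \<longleftrightarrow> v = (E0,E0,E0)"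
  by (cases v rule: prod_cases3) (simp add: Ev_zero_iff)

lemma E3_surj: "\<exists>v. EV3 r v = y"
proof -
  obtain y1 y2 y3 where y: "y = (y1,y2,y3)" by (cases y rule: prod_cases3)
  obtain a where "Ev r a = y1" using Ev_surj by blast
  moreover obtain b where "Ev r b = y2" using Ev_surj by blast
  moreover obtain c where "Ev r c = y3" using Ev_surj by blast
  ultimately have "EV3 r (a,b,c) = y" using y by simp
  then show ?thesis by blast
qed

lemma E3_lin: "EV3 r (lin u s w) = vadd (EV3 r u) (vsc (Ev r s) (EV3 r w))"
  by (cases u rule: prod_cases3; cases w rule: prod_cases3) (simp add: Ev_fa Ev_fm)

lemma nv_cnorm: "nv (cnorm v)"
  by (cases v rule: prod_cases3) simp

lemma E3_cnorm:
  assumes "v \<noteq> (E0,E0,E0)"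
  shows "\<exists>c. c \<noteq> 0 \<and> EV3 r (cnorm v) = vsc c (EV3 r v)"
proof -
  obtain a b c where v: "v = (a,b,c)" by (cases v rule: prod_cases3)
  consider "a \<noteq> E0" | "a = E0" "b \<noteq> E0" | "a = E0" "b = E0" "c \<noteq> E0" using assms v by blast
  then show ?thesis
  proof cases
    case 1
    then have "Ev r a \<noteq> 0" by (simp add: Ev_zero_iff)
    then show ?thesis using 1 v
      by (intro exI[of _ "inverse (Ev r a)"]) (simp add: Ev_fm Ev_finv Ev_E1 Ev_E0)
  next
    case 2
    then have "Ev r b \<noteq> 0" by (simp add: Ev_zero_iff)
    then show ?thesis using 2 v
      by (intro exI[of _ "inverse (Ev r b)"]) (simp add: Ev_fm Ev_finv Ev_E1 Ev_E0)
  next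
    case 3
    then have "Ev r c \<noteq> 0" by (simp add: Ev_zero_iff)
    then show ?thesis using 3 v
      by (intro exI[of _ "inverse (Ev r c)"]) (simp add: Ev_fm Ev_finv Ev_E1 Ev_E0)
  qed
qed

lemma nv_inj:
  assumes "nv v" "nv v'" "pt (EV3 r v) = pt (EV3 r v')"
  shows "v = v'"
proof -
  obtain c where e: "EV3 r v = vsc c (EV3 r v')" using pt_eq[OF assms(3)] by blast
  obtain a1 a2 a3 where v: "v = (a1,a2,a3)" by (cases v rule: prod_cases3)
  obtain b1 b2 b3 where v': "v' = (b1,b2,b3)" by (cases v' rule: prod_cases3)
  have e1: "Ev r a1 = c * Ev r b1" and e2: "Ev r a2 = c * Ev r b2" and e3: "Ev r a3 = c * Ev r b3"
    using e v v' by simp_all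
  show ?thesis using assms(1,2) e1 e2 e3 v v'
    by (auto simp: Ev_E0 Ev_E1 Ev_inj_iff Ev_inj_iff[symmetric])
qed

lemma pt_cnorm:
  assumes "y \<noteq> (E0,E0,E0)"
  shows "pt (EV3 r (cnorm y)) = pt (EV3 r y)"
  using E3_cnorm[OF assms] pt_scale by metis

lemma kernel_param:
  assumes m: "nv m" and x0: "x \<noteq> (0,0,0)" and h: "adot (EV3 r m) x = 0"
  shows "(\<exists>s c. x = vsc c (EV3 r (lin (ku m) s (kw m)))) \<or> (\<exists>c. x = vsc c (EV3 r (kw m)))"
proof -
  obtain m1 m2 m3 where mm: "m = (m1,m2,m3)" by (cases m rule: prod_cases3)
  obtain x1 x2 x3 where x: "x = (x1,x2,x3)" by (cases x rule: prod_cases3)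
  consider "m1 = E1" | "m1 = E0" "m2 = E1" | "m1 = E0" "m2 = E0" "m3 = E1" using m mm by auto
  then show ?thesis
  proof cases
    case 1
    have "x1 + (Ev r m2 * x2 + Ev r m3 * x3) = 0" using h 1 mm x by (simp add: Ev_E1 add.assoc)
    then have eq: "x1 = - (Ev r m2 * x2 + Ev r m3 * x3)" by (metis eq_neg_iff_add_eq_0)
    show ?thesis
    proof (cases "x2 = 0")
      case True
      have "x = vsc x3 (EV3 r (kw m))" using True eq 1 mm x by (simp add: Ev_fneg Ev_E0 Ev_E1)
      then show ?thesis by blast
    next
      case False
      obtain s where s: "Ev r s = x3 / x2" using Ev_surj by blast
      have "x = vsc x2 (EV3 r (lin (ku m) s (kw m)))" unfolding E3_lin using False eq 1 mm x s
        by (simp add: Ev_fneg Ev_E0 Ev_E1 algebra_simps)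
      then show ?thesis by blast
    qed
  next
    case 2
    have "x2 + Ev r m3 * x3 = 0" using h 2 mm x by (simp add: Ev_E1 Ev_E0)
    then have eq: "x2 = - (Ev r m3 * x3)" by (metis eq_neg_iff_add_eq_0)
    show ?thesis
    proof (cases "x1 = 0")
      case True
      have "x = vsc x3 (EV3 r (kw m))" using True eq 2 mm x by (simp add: Ev_fneg Ev_E0 Ev_E1)
      then show ?thesis by blast
    next
      case False
      obtain s where s: "Ev r s = x3 / x1" using Ev_surj by blast
      have "x = vsc x1 (EV3 r (lin (ku m) s (kw m)))" unfolding E3_lin using False eq 2 mm x s
        by (simp add: Ev_fneg Ev_E0 Ev_E1 algebra_simps)
      then show ?thesis by blast
    qed
  next
    case 3
    have eq: "x3 = 0" using h 3 mm x by (simp add: Ev_E1 Ev_E0)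
    show ?thesis
    proof (cases "x1 = 0")
      case True
      have "x = vsc x2 (EV3 r (kw m))" using True eq 3 mm x by (simp add: Ev_E0 Ev_E1)
      then show ?thesis by blast
    next
      case False
      obtain s where s: "Ev r s = x2 / x1" using Ev_surj by blast
      have "x = vsc x1 (EV3 r (lin (ku m) s (kw m)))" unfolding E3_lin using False eq 3 mm x s
        by (simp add: Ev_E0 Ev_E1)
      then show ?thesis by blast
    qed
  qed
qed

end


theorem mainTheorem12:
  assumes "CARD('a) = 25"
  shows "(\<exists>B :: ('a::{field, finite} \<times> 'a \<times> 'a) set set. is_arc 418 18 B)
         \<and> 418 \<le> m_arc TYPE('a) 18"
proof -
  obtain r :: 'a where r2: "r * r = 2" and rn: "\<forall>k. r \<noteq> of_nat k"
    using exists_sqrt2[OF assms] by blast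
  interpret G: gf25 r using assms r2 rn by unfold_locales auto
  define A where "A = {v. inA v}"
  define B where "B = (\<lambda>v. pt (EV3 r v)) ` A"
  have nvA: "nv v" if "v \<in> A" for v using that inA_nv by (simp add: A_def)
  have nz_nv: "v \<noteq> (E0,E0,E0)" if "nv v" for v using that by (cases v rule: prod_cases3) auto
  have E3nz: "EV3 r v \<noteq> (0,0,0)" if "nv v" for v using nz_nv[OF that] G.E3_zero_iff by blast
  have injB: "inj_on (\<lambda>v. pt (EV3 r v)) A"
    by (rule inj_onI) (use G.nv_inj nvA in blast)
  have finB: "finite B" unfolding B_def by simp
  have cardB: "card B = 418" unfolding B_def using card_image[OF injB] card_A by (simp add: A_def)
  have ptsB: "\<forall>P\<in>B. pg_point P" unfolding B_def using pg_point_pt E3nz nvA by blast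
  have memB: "pt (EV3 r y) \<in> B \<longleftrightarrow> inA (cnorm y)" if y: "y \<noteq> (E0,E0,E0)" for y
  proof
    assume "inA (cnorm y)"
    then have "pt (EV3 r (cnorm y)) \<in> B" unfolding B_def A_def by blast
    then show "pt (EV3 r y) \<in> B" using G.pt_cnorm[OF y] by simp
  next
    assume "pt (EV3 r y) \<in> B"
    then obtain v where v: "v \<in> A" "pt (EV3 r y) = pt (EV3 r v)" unfolding B_def by blast
    then have "pt (EV3 r (cnorm y)) = pt (EV3 r v)" using G.pt_cnorm[OF y] by simp
    then have "cnorm y = v" using G.nv_inj[OF G.nv_cnorm nvA[OF v(1)]] by blast
    then show "inA (cnorm y)" using v(1) by (simp add: A_def)
  qed
  have bound: "card {P \<in> B. P \<subseteq> L} \<le> 18" if L: "pg_line L" for L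
  proof -
    obtain n where n0: "n \<noteq> (0,0,0)" and Ln: "\<forall>x. x \<in> L \<longleftrightarrow> adot n x = 0"
      using line_normal[OF L] by blast
    obtain y where y: "EV3 r y = n" using G.E3_surj by blast
    have y0: "y \<noteq> (E0,E0,E0)" using y n0 G.E3_zero_iff by blast
    define m where "m = cnorm y"
    obtain c where c0: "c \<noteq> 0" and cm: "EV3 r m = vsc c n"
      using G.E3_cnorm[OF y0] y unfolding m_def by blast
    have nvm: "nv m" unfolding m_def by (rule G.nv_cnorm)
    have Lm: "\<forall>x. x \<in> L \<longleftrightarrow> adot (EV3 r m) x = 0" using Ln c0 by (simp add: cm adot_vsc_left)
    define S where "S = {s. inA (cnorm (lin (ku m) s (kw m)))}"
    define T where "T = (if inA (cnorm (kw m)) then {pt (EV3 r (kw m))} else {})"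
    have sub: "{P \<in> B. P \<subseteq> L} \<subseteq> (\<lambda>s. pt (EV3 r (lin (ku m) s (kw m)))) ` S \<union> T"
    proof
      fix P assume P: "P \<in> {P \<in> B. P \<subseteq> L}"
      then obtain v where v: "v \<in> A" "P = pt (EV3 r v)" unfolding B_def by blast
      have "adot (EV3 r m) (EV3 r v) = 0" using P v pt_sub_iff[OF Lm] by blast
      then have kp: "(\<exists>s c. EV3 r v = vsc c (EV3 r (lin (ku m) s (kw m)))) \<or> (\<exists>c. EV3 r v = vsc c (EV3 r (kw m)))"
        using G.kernel_param[OF nvm E3nz[OF nvA[OF v(1)]]] by blast
      have key: "pt (EV3 r v) = pt (EV3 r z) \<and> inA (cnorm z)" if e: "EV3 r v = vsc c' (EV3 r z)" for c' z
      proof -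
        have c'0: "c' \<noteq> 0" using e E3nz[OF nvA[OF v(1)]] vsc_0 by metis
        have z0: "z \<noteq> (E0,E0,E0)"
        proof
          assume "z = (E0,E0,E0)"
          then have "EV3 r z = (0,0,0)" using G.E3_zero_iff by blast
          then show False using e E3nz[OF nvA[OF v(1)]] by simp
        qed
        have pe: "pt (EV3 r v) = pt (EV3 r z)" using e pt_scale[OF c'0] by simp
        have "pt (EV3 r z) \<in> B" using pe v P by auto
        then show ?thesis using pe memB[OF z0] by blast
      qed
      from kp show "P \<in> (\<lambda>s. pt (EV3 r (lin (ku m) s (kw m)))) ` S \<union> T"
      proof
        assume "\<exists>s c. EV3 r v = vsc c (EV3 r (lin (ku m) s (kw m)))"
        then obtain s c' where "EV3 r v = vsc c' (EV3 r (lin (ku m) s (kw m)))" by blast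
        from key[OF this] show ?thesis using v(2) unfolding S_def by blast
      next
        assume "\<exists>c. EV3 r v = vsc c (EV3 r (kw m))"
        then obtain c' where "EV3 r v = vsc c' (EV3 r (kw m))" by blast
        from key[OF this] show ?thesis using v(2) unfolding T_def by auto
      qed
    qed
    have "card {P \<in> B. P \<subseteq> L} \<le> card ((\<lambda>s. pt (EV3 r (lin (ku m) s (kw m)))) ` S \<union> T)"
      by (rule card_mono[OF _ sub]) (simp add: T_def)
    also have "\<dots> \<le> card ((\<lambda>s. pt (EV3 r (lin (ku m) s (kw m)))) ` S) + card T" by (rule card_Un_le)
    also have "\<dots> \<le> card S + card T" using card_image_le[of S] by simp
    also have "\<dots> = lc m" unfolding S_def T_def lc_def card_filter by simp
    also have "\<dots> \<le> 18" using lc_all[OF nvm] .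
    finally show ?thesis .
  qed
  define L0 :: "('a \<times> 'a \<times> 'a) set" where "L0 = {vadd (vsc s (1,0,0)) (vsc t (0,1,0)) | s t. True}"
  have L0line: "pg_line L0" unfolding pg_line_def L0_def
    by (rule exI[of _ "(1,0,0)"], rule exI[of _ "(0,1,0)"]) simp
  have L0c: "\<forall>x. x \<in> L0 \<longleftrightarrow> adot (0,0,1) x = 0"
  proof
    fix x :: "'a \<times> 'a \<times> 'a"
    obtain x1 x2 x3 where x: "x = (x1,x2,x3)" by (cases x rule: prod_cases3)
    show "x \<in> L0 \<longleftrightarrow> adot (0,0,1) x = 0"
    proof
      assume "x \<in> L0" then show "adot (0,0,1) x = 0" unfolding L0_def by auto
    next
      assume "adot (0,0,1) x = 0"
      then have "x = vadd (vsc x1 (1,0,0)) (vsc x2 (0,1,0))" using x by simp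
      then show "x \<in> L0" unfolding L0_def by blast
    qed
  qed
  have L0set: "{P \<in> B. P \<subseteq> L0} = (\<lambda>v. pt (EV3 r v)) ` {v. inA v \<and> snd (snd v) = E0}"
  proof -
    have "pt (EV3 r v) \<subseteq> L0 \<longleftrightarrow> snd (snd v) = E0" for v
      using pt_sub_iff[OF L0c, of "EV3 r v"]
      by (cases v rule: prod_cases3) (simp add: G.Ev_zero_iff)
    then show ?thesis unfolding B_def A_def by auto
  qed
  have "card {P \<in> B. P \<subseteq> L0} = 18"
  proof -
    have "inj_on (\<lambda>v. pt (EV3 r v)) {v. inA v \<and> snd (snd v) = E0}"
      by (rule inj_on_subset[OF injB]) (auto simp: A_def)
    then show ?thesis unfolding L0set using card_A0 by (simp add: card_image)
  qed
  then have arc: "is_arc 418 18 B"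
    unfolding is_arc_def using finB ptsB cardB bound L0line by blast
  have fin: "finite {n. \<exists>B :: ('a \<times> 'a \<times> 'a) set set. is_arc n 18 B}"
  proof (rule finite_subset)
    show "{n. \<exists>B :: ('a \<times> 'a \<times> 'a) set set. is_arc n 18 B} \<subseteq> {..card (UNIV :: ('a \<times> 'a \<times> 'a) set set)}"
    proof
      fix n assume "n \<in> {n. \<exists>B :: ('a \<times> 'a \<times> 'a) set set. is_arc n 18 B}"
      then obtain X :: "('a \<times> 'a \<times> 'a) set set" where "is_arc n 18 X" by blast
      then have "n = card X" by (simp add: is_arc_def)
      moreover have "card X \<le> card (UNIV :: ('a \<times> 'a \<times> 'a) set set)" by (rule card_mono) simp_all
      ultimately show "n \<in> {..card (UNIV :: ('a \<times> 'a \<times> 'a) set set)}" by simp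
    qed
  qed simp
  have "418 \<le> m_arc TYPE('a) 18"
    unfolding m_arc_def using arc fin by (intro Max_ge) auto
  then show ?thesis using arc by blast
qed

end
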